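(* Let $\mathcal{H}=\mathcal{H}_1\otimes\cdots\otimes\mathcal{H}_n$ be a tensor product of finite-dimensional complex Hilbert spaces, $\ket{\psi}\in\mathcal{H}$ a unit vector and $\rho=\ket{\psi}\bra{\psi}$. Then for every $k$ with $0\le k\le n$, $$\dim\big(H^k(\rho)\big)=\dim\big(H^{n-k}(\rho)\big),$$ where $H^k(\rho)=\ker(d^k)/\mathrm{im}(d^{k-1})$ is the $k$-th cohomology of the entanglement complex $0\to\mathbb{C}\xrightarrow{d^0}\Omega^1(\rho)\xrightarrow{d^1}\cdots\xrightarrow{d^{n-1}}\Omega^n(\rho)\xrightarrow{d^n}0$.
   Context: Notation. For $I\subseteq\{1,\dots,n\}$, $\mathcal{H}_I=\bigotimes_{i\in I}\mathcal{H}_i$ with factors in increasing order; $\rho_I=\mathrm{tr}_{I^C}(\rho)$ is the reduced density matrix (partial trace over the complementary factors), $s_I$ is the orthogonal projection onto $\mathrm{im}(\rho_I)$, and $\mathcal{O}|_{\rho_I}=s_I\mathcal{O}s_I$ for an operator $\mathcal{O}$ on $\mathcal{H}_I$. Entanglement forms. $\Omega^0(\rho)=\mathbb{C}$, and for $1\le k\le n$, $\Omega^k(\rho)=\prod_{|I|=k}\{s_I\mathcal{O}s_I:\mathcal{O}\in\mathrm{End}(\mathcal{H}_I)\}$ (tuples $\omega=(\omega_I)_{|I|=k}$ indexed by the $k$-element subsets). Signed tensor product. For $j\notin J$ and an operator $X$ on $\mathcal{H}_J$, $\mathbb{I}_j\,\widehat{\otimes}\,X$ denotes $(-1)^{p}$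 times the operator on $\mathcal{H}_{J\cup\{j\}}$ (factors in increasing order) acting as the identity on $\mathcal{H}_j$ and as $X$ on the remaining factors, where $p=\#\{i\in J: i<j\}$. Coboundary. $d^{-1}=0$; $d^0\lambda=(\lambda s_{\{1\}},\dots,\lambda s_{\{n\}})$ for $\lambda\in\mathbb{C}$; for $1\le m\le n-1$, $d^m:\Omega^m(\rho)\to\Omega^{m+1}(\rho)$ has components $(d^m\omega)_I=\big(m\sum_{j\in I}\mathbb{I}_j\,\widehat{\otimes}\,\omega_{I\setminus\{j\}}\big)\big|_{\rho_I}$ for $|I|=m+1$; $d^n=0$. These satisfy $d^m\circ d^{m-1}=0$. *)

theory Defs
  imports Complex_Main "HOL-Library.Function_Algebras"
begin

text \<open>The i-th Hilbert space is modelled as C^(d i) with its standard inner product.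
  A basis index of H_I is a function a :: nat => nat with a i < d i for i in I and
  a i = 0 outside I.  Operators on H_I are kernels (matrices) indexed by such
  multi-indices, zero outside.\<close>

type_synonym op = "(nat \<Rightarrow> nat) \<Rightarrow> (nat \<Rightarrow> nat) \<Rightarrow> complex"
type_synonym eform = "nat set \<Rightarrow> op"

definition idx :: "(nat \<Rightarrow> nat) \<Rightarrow> nat set \<Rightarrow> (nat \<Rightarrow> nat) set" where
  "idx d I = {a. (\<forall>i\<in>I. a i < d i) \<and> (\<forall>i. i \<notin> I \<longrightarrow> a i = 0)}"

definition op_mult :: "(nat \<Rightarrow> nat) \<Rightarrow> nat set \<Rightarrow> op \<Rightarrow> op \<Rightarrow> op" where
  "op_mult d I X Y = (\<lambda>a b. if a \<in> idx d I \<and> b \<in> idx d I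
      then (\<Sum>c\<in>idx d I. X a c * Y c b) else 0)"

definition op_apply :: "(nat \<Rightarrow> nat) \<Rightarrow> nat set \<Rightarrow> op \<Rightarrow> ((nat \<Rightarrow> nat) \<Rightarrow> complex)
    \<Rightarrow> ((nat \<Rightarrow> nat) \<Rightarrow> complex)" where
  "op_apply d I X v = (\<lambda>a. if a \<in> idx d I then (\<Sum>b\<in>idx d I. X a b * v b) else 0)"

definition op_range :: "(nat \<Rightarrow> nat) \<Rightarrow> nat set \<Rightarrow> op \<Rightarrow> ((nat \<Rightarrow> nat) \<Rightarrow> complex) set" where
  "op_range d I X = range (op_apply d I X)"

definition op_supported :: "(nat \<Rightarrow> nat) \<Rightarrow> nat set \<Rightarrow> op \<Rightarrow> bool" where
  "op_supported d I X = (\<forall>a b. a \<notin> idx d I \<or> b \<notin> idx d I \<longrightarrow> X a b = 0)"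

definition is_orth_proj :: "(nat \<Rightarrow> nat) \<Rightarrow> nat set \<Rightarrow> op \<Rightarrow> bool" where
  "is_orth_proj d I P = (op_supported d I P \<and> op_mult d I P P = P
      \<and> (\<forall>a b. P a b = cnj (P b a)))"

definition im_proj :: "(nat \<Rightarrow> nat) \<Rightarrow> nat set \<Rightarrow> op \<Rightarrow> op" where
  "im_proj d I X = (THE P. is_orth_proj d I P \<and> op_range d I P = op_range d I X)"

definition dens :: "nat \<Rightarrow> (nat \<Rightarrow> nat) \<Rightarrow> ((nat \<Rightarrow> nat) \<Rightarrow> complex) \<Rightarrow> op" where
  "dens n d \<psi> = (\<lambda>a b. if a \<in> idx d {1..n} \<and> b \<in> idx d {1..n}
      then \<psi> a * cnj (\<psi> b) else 0)"

definition rdm :: "nat \<Rightarrow> (nat \<Rightarrow> nat) \<Rightarrow> ((nat \<Rightarrow> nat) \<Rightarrow> complex) \<Rightarrow> nat set \<Rightarrow> op" where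
  "rdm n d \<psi> I = (\<lambda>a b. if a \<in> idx d I \<and> b \<in> idx d I
      then (\<Sum>c\<in>idx d ({1..n} - I). dens n d \<psi> (\<lambda>i. a i + c i) (\<lambda>i. b i + c i))
      else 0)"

definition supp :: "nat \<Rightarrow> (nat \<Rightarrow> nat) \<Rightarrow> ((nat \<Rightarrow> nat) \<Rightarrow> complex) \<Rightarrow> nat set \<Rightarrow> op" where
  "supp n d \<psi> I = im_proj d I (rdm n d \<psi> I)"

definition restr :: "nat \<Rightarrow> (nat \<Rightarrow> nat) \<Rightarrow> ((nat \<Rightarrow> nat) \<Rightarrow> complex) \<Rightarrow> nat set \<Rightarrow> op \<Rightarrow> op" where
  "restr n d \<psi> I X = op_mult d I (supp n d \<psi> I) (op_mult d I X (supp n d \<psi> I))"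

text \<open>Entanglement forms Omega^k(rho): tuples indexed by k-subsets of {1..n},
  the component at every other index set being 0.  Omega^0 = C is the set of
  forms living at I = {} (a 1x1 operator, i.e. a scalar).\<close>
definition eforms :: "nat \<Rightarrow> (nat \<Rightarrow> nat) \<Rightarrow> ((nat \<Rightarrow> nat) \<Rightarrow> complex) \<Rightarrow> nat \<Rightarrow> eform set" where
  "eforms n d \<psi> k = (if k = 0 then
      {\<omega>. (\<forall>I. I \<noteq> {} \<longrightarrow> \<omega> I = 0) \<and>
           (\<forall>a b. a \<noteq> (\<lambda>i. 0) \<or> b \<noteq> (\<lambda>i. 0) \<longrightarrow> \<omega> {} a b = 0)}
    else {\<omega>. \<forall>I. if I \<subseteq> {1..n} \<and> card I = k then (\<exists>X. \<omega> I = restr n d \<psi> I X)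
                 else \<omega> I = 0})"

definition stensor :: "(nat \<Rightarrow> nat) \<Rightarrow> nat \<Rightarrow> nat set \<Rightarrow> op \<Rightarrow> op" where
  "stensor d j J X = (\<lambda>a b. if a \<in> idx d (insert j J) \<and> b \<in> idx d (insert j J)
      then (-1) ^ card {i\<in>J. i < j} * (if a j = b j then X (a(j := 0)) (b(j := 0)) else 0)
      else 0)"

definition cobound :: "nat \<Rightarrow> (nat \<Rightarrow> nat) \<Rightarrow> ((nat \<Rightarrow> nat) \<Rightarrow> complex) \<Rightarrow> nat \<Rightarrow> eform \<Rightarrow> eform" where
  "cobound n d \<psi> m \<omega> = (if m = 0 then
       (\<lambda>I. if \<exists>j\<in>{1..n}. I = {j}
            then (\<lambda>a b. \<omega> {} (\<lambda>i. 0) (\<lambda>i. 0) * supp n d \<psi> I a b) else 0)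
     else if m < n then
       (\<lambda>I. if I \<subseteq> {1..n} \<and> card I = m + 1
            then restr n d \<psi> I (\<lambda>a b. of_nat m *
                   (\<Sum>j\<in>I. stensor d j (I - {j}) (\<omega> (I - {j})) a b))
            else 0)
     else 0)"

definition cscale :: "complex \<Rightarrow> eform \<Rightarrow> eform" where
  "cscale c \<omega> = (\<lambda>I a b. c * \<omega> I a b)"

definition cohom_dim :: "nat \<Rightarrow> (nat \<Rightarrow> nat) \<Rightarrow> ((nat \<Rightarrow> nat) \<Rightarrow> complex) \<Rightarrow> nat \<Rightarrow> nat" where
  "cohom_dim n d \<psi> k =
     vector_space.dim cscale {\<omega> \<in> eforms n d \<psi> k. cobound n d \<psi> k \<omega> = 0}
     - (if k = 0 then 0
        else vector_space.dim cscale (cobound n d \<psi> (k - 1) ` eforms n d \<psi> (k - 1)))"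

end

theory Submission
  imports Defs "HOL-Library.FuncSet"
begin

lemma finite_idx: assumes "finite I" shows "finite (idx d I)"
proof -
  have "idx d I \<subseteq> (\<lambda>f i. if i \<in> I then f i else 0) ` (PiE I (\<lambda>i. {..<d i}))"
  proof
    fix a assume a: "a \<in> idx d I"
    have "a = (\<lambda>i. if i \<in> I then restrict a I i else 0)"
      using a by (auto simp: idx_def fun_eq_iff restrict_def)
    moreover have "restrict a I \<in> PiE I (\<lambda>i. {..<d i})" using a by (auto simp: idx_def)
    ultimately show "a \<in> (\<lambda>f i. if i \<in> I then f i else 0) ` (PiE I (\<lambda>i. {..<d i}))" by blast
  qed
  moreover have "finite (PiE I (\<lambda>i. {..<d i}))" using assms by (intro finite_PiE) auto
  ultimately show ?thesis using finite_subset by blast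
qed

definition rs :: "nat set \<Rightarrow> (nat \<Rightarrow> nat) \<Rightarrow> (nat \<Rightarrow> nat)" where
  "rs I x = (\<lambda>i. if i \<in> I then x i else 0)"

lemma idx_add: "a \<in> idx d I \<Longrightarrow> c \<in> idx d K \<Longrightarrow> I \<inter> K = {} \<Longrightarrow> a + c \<in> idx d (I \<union> K)"
  by (auto simp: idx_def disjoint_iff)

lemma rs_add1: "a \<in> idx d I \<Longrightarrow> c \<in> idx d K \<Longrightarrow> I \<inter> K = {} \<Longrightarrow> rs I (a + c) = a"
  by (auto simp: idx_def rs_def fun_eq_iff disjoint_iff)

lemma rs_add2: "a \<in> idx d I \<Longrightarrow> c \<in> idx d K \<Longrightarrow> I \<inter> K = {} \<Longrightarrow> rs K (a + c) = c"
  by (auto simp: idx_def rs_def fun_eq_iff disjoint_iff)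

lemma rs_idx: "x \<in> idx d J \<Longrightarrow> rs I x \<in> idx d (I \<inter> J)"
  by (auto simp: idx_def rs_def)

lemma rs_idx': "x \<in> idx d J \<Longrightarrow> I \<subseteq> J \<Longrightarrow> rs I x \<in> idx d I"
  using rs_idx[of x d J I] by (simp add: Int_absorb2)

lemma rs_split: "x \<in> idx d (I \<union> K) \<Longrightarrow> I \<inter> K = {} \<Longrightarrow> rs I x + rs K x = x"
  by (auto simp: idx_def rs_def fun_eq_iff)

lemma sum_idx_split:
  assumes "I \<inter> K = {}" "finite I" "finite K"
  shows "(\<Sum>x\<in>idx d (I \<union> K). f x) = (\<Sum>a\<in>idx d I. \<Sum>c\<in>idx d K. f (a + c))"
proof -
  have bij: "bij_betw (\<lambda>(a,c). a + c) (idx d I \<times> idx d K) (idx d (I \<union> K))"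
  proof (rule bij_betw_byWitness[where f' = "\<lambda>x. (rs I x, rs K x)"])
    show "\<forall>p\<in>idx d I \<times> idx d K. (rs I (case p of (a, c) \<Rightarrow> a + c), rs K (case p of (a, c) \<Rightarrow> a + c)) = p"
      using assms by (auto simp: rs_add1 rs_add2)
    show "\<forall>x\<in>idx d (I \<union> K). (case (rs I x, rs K x) of (a, c) \<Rightarrow> a + c) = x"
      using assms by (auto simp: rs_split)
    show "(\<lambda>(a, c). a + c) ` (idx d I \<times> idx d K) \<subseteq> idx d (I \<union> K)"
      using assms by (auto intro: idx_add)
    show "(\<lambda>x. (rs I x, rs K x)) ` idx d (I \<union> K) \<subseteq> idx d I \<times> idx d K"
      by (auto intro!: rs_idx')
  qed
  have "(\<Sum>x\<in>idx d (I \<union> K). f x) = (\<Sum>p\<in>idx d I \<times> idx d K. f ((\<lambda>(a,c). a + c) p))"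
    using sum.reindex_bij_betw[OF bij, of f] by simp
  also have "\<dots> = (\<Sum>a\<in>idx d I. \<Sum>c\<in>idx d K. f (a + c))"
    by (simp add: sum.cartesian_product split_def)
  finally show ?thesis .
qed

definition adj :: "op \<Rightarrow> op" where "adj X = (\<lambda>a b. cnj (X b a))"

lemma op_mult_assoc: "op_mult d I (op_mult d I X Y) Z = op_mult d I X (op_mult d I Y Z)"
proof (rule ext, rule ext)
  fix a b
  show "op_mult d I (op_mult d I X Y) Z a b = op_mult d I X (op_mult d I Y Z) a b"
  proof (cases "a \<in> idx d I \<and> b \<in> idx d I")
    case True
    then have "(\<Sum>c\<in>idx d I. (\<Sum>e\<in>idx d I. X a e * Y e c) * Z c b) =
      (\<Sum>c\<in>idx d I. X a c * (\<Sum>e\<in>idx d I. Y c e * Z e b))"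
      by (simp add: sum_distrib_left sum_distrib_right mult.assoc) (rule sum.swap)
    then show ?thesis using True unfolding op_mult_def by (simp cong: sum.cong)
  qed (auto simp: op_mult_def)
qed

lemma op_mult_outside: "a \<notin> idx d I \<or> b \<notin> idx d I \<Longrightarrow> op_mult d I X Y a b = 0"
  by (auto simp: op_mult_def)

lemma op_mult_supported: "op_supported d I (op_mult d I X Y)"
  by (auto simp: op_supported_def op_mult_def)

lemma adj_adj[simp]: "adj (adj X) = X" by (simp add: adj_def)

lemma adj_mult: "adj (op_mult d I X Y) = op_mult d I (adj Y) (adj X)"
proof (rule ext, rule ext)
  fix a b show "adj (op_mult d I X Y) a b = op_mult d I (adj Y) (adj X) a b"
    unfolding adj_def op_mult_def
    by (simp add: mult.commute)
qed

lemma op_mult_add_left: "op_mult d I (X + Y) Z = op_mult d I X Z + op_mult d I Y Z"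
  by (rule ext)+ (simp add: op_mult_def distrib_right sum.distrib)

lemma op_mult_add_right: "op_mult d I X (Y + Z) = op_mult d I X Y + op_mult d I X Z"
  by (rule ext)+ (simp add: op_mult_def distrib_left sum.distrib)

lemma op_mult_scale_left: "op_mult d I (\<lambda>a b. c * X a b) Y = (\<lambda>a b. c * op_mult d I X Y a b)"
  by (rule ext)+ (simp add: op_mult_def sum_distrib_left mult.assoc)

lemma op_mult_scale_right: "op_mult d I X (\<lambda>a b. c * Y a b) = (\<lambda>a b. c * op_mult d I X Y a b)"
  by (rule ext)+ (simp add: op_mult_def sum_distrib_left mult.assoc mult.left_commute[of c])

lemma op_mult_zero_left[simp]: "op_mult d I 0 Y = 0"
  by (rule ext)+ (simp add: op_mult_def)

lemma op_mult_zero_right[simp]: "op_mult d I X 0 = 0"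
  by (rule ext)+ (simp add: op_mult_def)

lemma orth_proj_herm: "is_orth_proj d I P \<Longrightarrow> P a b = cnj (P b a)"
  unfolding is_orth_proj_def by blast

lemma orth_proj_adj: assumes "is_orth_proj d I P" shows "adj P = P"
proof (intro ext)
  fix a b
  have "P b a = cnj (P a b)" using orth_proj_herm[OF assms] .
  then show "adj P a b = P a b" by (simp add: adj_def)
qed

lemma orth_proj_idem: "is_orth_proj d I P \<Longrightarrow> op_mult d I P P = P"
  unfolding is_orth_proj_def by blast

lemma orth_proj_supp: "is_orth_proj d I P \<Longrightarrow> op_supported d I P"
  unfolding is_orth_proj_def by blast

lemma op_apply_mult: "op_apply d I (op_mult d I X Y) v = op_apply d I X (op_apply d I Y v)"
proof (rule ext)
  fix a show "op_apply d I (op_mult d I X Y) v a = op_apply d I X (op_apply d I Y v) a"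
  proof (cases "a \<in> idx d I")
    case True
    then have "(\<Sum>b\<in>idx d I. (\<Sum>c\<in>idx d I. X a c * Y c b) * v b) =
      (\<Sum>b\<in>idx d I. X a b * (\<Sum>c\<in>idx d I. Y b c * v c))"
      by (simp add: sum_distrib_left sum_distrib_right mult.assoc) (rule sum.swap)
    then show ?thesis using True unfolding op_apply_def op_mult_def by (simp cong: sum.cong)
  qed (simp add: op_apply_def)
qed

lemma op_apply_diff: "op_apply d I P (\<lambda>a. u a - v a) = (\<lambda>a. op_apply d I P u a - op_apply d I P v a)"
  by (rule ext) (simp add: op_apply_def right_diff_distrib sum_subtractf)

lemma cnj_P_sum:
  assumes P: "is_orth_proj d I P" and f: "f \<in> idx d I"
  shows "(\<Sum>e\<in>idx d I. cnj (w e) * P e f) = cnj (op_apply d I P w f)"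
proof -
  have "(\<Sum>e\<in>idx d I. cnj (w e) * P e f) = (\<Sum>e\<in>idx d I. cnj (P f e * w e))"
  proof (rule sum.cong)
    fix e have "P e f = cnj (P f e)" by (rule orth_proj_herm[OF P])
    then show "cnj (w e) * P e f = cnj (P f e * w e)" by (simp add: mult.commute)
  qed simp
  also have "\<dots> = cnj (op_apply d I P w f)" using f by (simp add: op_apply_def)
  finally show ?thesis .
qed

lemma norm_sum_pos:
  assumes "finite S" "a \<in> S" "w a \<noteq> 0"
  shows "(\<Sum>e\<in>S. cnj (w e) * w e) = of_real (\<Sum>e\<in>S. (cmod (w e))\<^sup>2)"
    and "(\<Sum>e\<in>S. (cmod (w e))\<^sup>2) > 0"
proof -
  show "(\<Sum>e\<in>S. cnj (w e) * w e) = of_real (\<Sum>e\<in>S. (cmod (w e))\<^sup>2)"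
    unfolding of_real_sum
    by (rule sum.cong) (simp_all add: complex_norm_square mult.commute del: of_real_power)
  have "(cmod (w a))\<^sup>2 > 0" using assms by simp
  then show "(\<Sum>e\<in>S. (cmod (w e))\<^sup>2) > 0"
    using assms by (intro sum_pos2[of S a]) auto
qed

lemma gs_step:
  assumes finI: "finite I" and A: "op_supported d I A" and b: "b \<in> idx d I"
    and P: "is_orth_proj d I P" and T: "\<forall>b'\<in>T. \<forall>a. op_mult d I P A a b' = A a b'"
    and TS: "T \<subseteq> idx d I" and PN: "P = op_mult d I A N"
  shows "\<exists>P N. is_orth_proj d I P \<and> (\<forall>b'\<in>insert b T. \<forall>a. op_mult d I P A a b' = A a b') \<and> P = op_mult d I A N"
proof -
  let ?S = "idx d I"
  have finS: "finite ?S" using finI by (rule finite_idx)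
  define u where "u = (\<lambda>a. A a b)"
  define w where "w = (\<lambda>a. u a - op_apply d I P u a)"
  have usupp: "\<And>a. a \<notin> ?S \<Longrightarrow> u a = 0" using A by (auto simp: u_def op_supported_def)
  have wsupp: "\<And>a. a \<notin> ?S \<Longrightarrow> w a = 0" using usupp by (auto simp: w_def op_apply_def)
  have Pidem: "op_mult d I P P = P" using orth_proj_idem[OF P] .
  have Pw: "op_apply d I P w = (\<lambda>a. 0)"
    unfolding w_def op_apply_diff
    by (simp add: op_apply_mult[symmetric] Pidem)
  have F2: "\<And>f. f \<in> ?S \<Longrightarrow> (\<Sum>e\<in>?S. cnj (w e) * P e f) = 0"
    using cnj_P_sum[OF P] Pw by simp
  have PAb: "\<And>a. op_mult d I P A a b = op_apply d I P u a"
    using b by (simp add: op_mult_def op_apply_def u_def)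
  have F3: "\<And>z. (\<Sum>e\<in>?S. cnj (w e) * op_apply d I P z e) = 0"
  proof -
    fix z
    have "(\<Sum>e\<in>?S. cnj (w e) * op_apply d I P z e) = (\<Sum>e\<in>?S. \<Sum>f\<in>?S. cnj (w e) * P e f * z f)"
      by (simp add: op_apply_def sum_distrib_left mult.assoc)
    also have "\<dots> = (\<Sum>f\<in>?S. (\<Sum>e\<in>?S. cnj (w e) * P e f) * z f)"
      by (subst sum.swap) (simp add: sum_distrib_right)
    also have "\<dots> = 0" using F2 by simp
    finally show "(\<Sum>e\<in>?S. cnj (w e) * op_apply d I P z e) = 0" .
  qed
  show ?thesis
  proof (cases "\<forall>a. w a = 0")
    case True
    then have "\<And>a. op_apply d I P u a = u a" by (simp add: w_def)
    then have "\<forall>a. op_mult d I P A a b = A a b" using PAb by (simp add: u_def)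
    then show ?thesis using P T PN by blast
  next
    case False
    then obtain a0 where "w a0 \<noteq> 0" by blast
    then have a0: "a0 \<in> ?S" using wsupp by blast
    define nrm where "nrm = (\<Sum>e\<in>?S. cnj (w e) * w e)"
    have nrm_real: "nrm = of_real (\<Sum>e\<in>?S. (cmod (w e))\<^sup>2)"
      unfolding nrm_def of_real_sum
      by (rule sum.cong) (simp_all add: complex_norm_square mult.commute del: of_real_power)
    have rpos: "(\<Sum>e\<in>?S. (cmod (w e))\<^sup>2) > 0"
      using norm_sum_pos(2)[of "idx d I" a0 w] finS a0 \<open>w a0 \<noteq> 0\<close> by blast
    have nrm0: "nrm \<noteq> 0"
      by (metis nrm_real of_real_eq_0_iff less_irrefl rpos)
    have cnj_nrm: "cnj nrm = nrm" using nrm_real by simp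
    define Q :: op where "Q = (\<lambda>a c. w a * cnj (w c) / nrm)"
    define P' where "P' = P + Q"
    have PQ: "op_mult d I P Q = 0"
    proof (rule ext, rule ext)
      fix a c
      have "(\<Sum>e\<in>?S. P a e * (w e * cnj (w c) / nrm)) = op_apply d I P w a * cnj (w c) / nrm"
        if "a \<in> ?S" using that by (simp add: op_apply_def sum_distrib_right mult.assoc sum_divide_distrib)
      then show "op_mult d I P Q a c = 0 a c" using Pw by (simp add: op_mult_def Q_def)
    qed
    have QP: "op_mult d I Q P = 0"
    proof (rule ext, rule ext)
      fix a c
      have "(\<Sum>e\<in>?S. w a * cnj (w e) / nrm * P e c) = w a / nrm * (\<Sum>e\<in>?S. cnj (w e) * P e c)"
        by (simp add: sum_distrib_left mult.assoc)
      then show "op_mult d I Q P a c = 0 a c" using F2 by (simp add: op_mult_def Q_def)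
    qed
    have QQ: "op_mult d I Q Q = Q"
    proof (rule ext, rule ext)
      fix a c
      show "op_mult d I Q Q a c = Q a c"
      proof (cases "a \<in> ?S \<and> c \<in> ?S")
        case True
        have "(\<Sum>e\<in>?S. w a * cnj (w e) / nrm * (w e * cnj (w c) / nrm))
             = w a * cnj (w c) / nrm / nrm * nrm"
          by (simp add: nrm_def sum_distrib_left sum_distrib_right sum_divide_distrib mult.commute mult.left_commute)
        also have "\<dots> = Q a c" using nrm0 by (simp add: Q_def)
        finally show ?thesis using True by (simp add: op_mult_def Q_def)
      next
        case False
        then show ?thesis using wsupp by (auto simp: op_mult_def Q_def)
      qed
    qed
    have P'proj: "is_orth_proj d I P'"
      unfolding is_orth_proj_def
    proof (intro conjI allI)
      show "op_supported d I P'"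
        using orth_proj_supp[OF P] wsupp by (auto simp: op_supported_def P'_def Q_def)
      show "op_mult d I P' P' = P'"
        unfolding P'_def op_mult_add_left op_mult_add_right using Pidem PQ QP QQ by simp
      fix a c
      show "P' a c = cnj (P' c a)"
        using orth_proj_herm[OF P, of a c] cnj_nrm by (simp add: P'_def Q_def mult.commute)
    qed
    have QA: "\<And>a b'. op_mult d I Q A a b' = (if a \<in> ?S \<and> b' \<in> ?S then w a / nrm * (\<Sum>e\<in>?S. cnj (w e) * A e b') else 0)"
      by (simp add: op_mult_def Q_def sum_distrib_left mult.assoc)
    have good: "\<forall>b'\<in>insert b T. \<forall>a. op_mult d I P' A a b' = A a b'"
    proof (intro ballI allI)
      fix b' a assume b': "b' \<in> insert b T"
      then have b'S: "b' \<in> ?S" using b TS by auto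
      show "op_mult d I P' A a b' = A a b'"
      proof (cases "b' = b")
        case True
        have "(\<Sum>e\<in>?S. cnj (w e) * u e) = (\<Sum>e\<in>?S. cnj (w e) * w e + cnj (w e) * op_apply d I P u e)"
          by (rule sum.cong) (auto simp: w_def algebra_simps)
        also have "\<dots> = nrm" using F3 by (simp add: sum.distrib nrm_def)
        finally have s: "(\<Sum>e\<in>?S. cnj (w e) * A e b) = nrm" by (simp add: u_def)
        show ?thesis
        proof (cases "a \<in> ?S")
          case True
          then show ?thesis using \<open>b' = b\<close> b s nrm0 PAb[of a]
            by (simp add: P'_def op_mult_add_left QA w_def u_def)
        next
          case False
          then show ?thesis using A by (simp add: op_mult_outside op_mult_add_left P'_def op_supported_def)
        qed
      next
        case False
        then have b'T: "b' \<in> T" using b' by auto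
        have "(\<Sum>e\<in>?S. cnj (w e) * A e b') = (\<Sum>e\<in>?S. cnj (w e) * op_apply d I P (\<lambda>f. A f b') e)"
        proof (rule sum.cong)
          fix e assume e: "e \<in> ?S"
          have "A e b' = op_mult d I P A e b'" using T b'T by simp
          also have "\<dots> = op_apply d I P (\<lambda>f. A f b') e" using e b'S by (simp add: op_mult_def op_apply_def)
          finally show "cnj (w e) * A e b' = cnj (w e) * op_apply d I P (\<lambda>f. A f b') e" by simp
        qed simp
        also have "\<dots> = 0" by (rule F3)
        finally have "op_mult d I Q A a b' = 0" using QA by simp
        then show ?thesis using T b'T by (simp add: P'_def op_mult_add_left)
      qed
    qed
    define g where "g = (\<lambda>e. (if e = b then 1 else 0) - op_apply d I N u e)"
    define G :: op where "G = (\<lambda>e c. g e * cnj (w c) / nrm)"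
    have AG: "op_mult d I A G = Q"
    proof (rule ext, rule ext)
      fix a c
      show "op_mult d I A G a c = Q a c"
      proof (cases "a \<in> ?S \<and> c \<in> ?S")
        case True
        have "(\<Sum>e\<in>?S. A a e * (if e = b then 1 else 0)) = A a b"
          using b finS by (simp add: if_distrib cong: if_cong)
        moreover have "(\<Sum>e\<in>?S. A a e * op_apply d I N u e) = op_apply d I P u a"
        proof -
          have "op_apply d I P u a = op_apply d I A (op_apply d I N u) a" by (simp only: PN op_apply_mult)
          then show ?thesis using True by (simp add: op_apply_def[of d I A])
        qed
        ultimately have "(\<Sum>e\<in>?S. A a e * g e) = w a"
          by (simp add: g_def right_diff_distrib sum_subtractf w_def u_def)
        then have "(\<Sum>e\<in>?S. A a e * (g e * cnj (w c) / nrm)) = w a * cnj (w c) / nrm"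
          by (simp add: sum_distrib_right[symmetric] mult.assoc[symmetric] sum_divide_distrib[symmetric])
        then show ?thesis using True by (simp add: op_mult_def G_def Q_def)
      next
        case False
        then show ?thesis using wsupp by (auto simp: op_mult_def Q_def)
      qed
    qed
    have "P' = op_mult d I A (N + G)"
      by (simp add: op_mult_add_right AG PN[symmetric] P'_def)
    then show ?thesis using P'proj good by blast
  qed
qed

lemma gs:
  assumes finI: "finite I" and A: "op_supported d I A"
  shows "finite T \<Longrightarrow> T \<subseteq> idx d I \<Longrightarrow> \<exists>P N. is_orth_proj d I P \<and> (\<forall>b\<in>T. \<forall>a. op_mult d I P A a b = A a b) \<and> P = op_mult d I A N"
proof (induction T rule: finite_induct)
  case empty
  have "is_orth_proj d I 0" by (simp add: is_orth_proj_def op_supported_def)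
  moreover have "(0::op) = op_mult d I A 0" by simp
  ultimately show ?case by blast
next
  case (insert b T)
  then obtain P N where "is_orth_proj d I P" "\<forall>b\<in>T. \<forall>a. op_mult d I P A a b = A a b" "P = op_mult d I A N"
    by auto
  then show ?case using gs_step[OF finI A, of b P T N] insert by auto
qed

lemma apply_basis:
  assumes "b \<in> idx d I" "finite I"
  shows "op_apply d I X (\<lambda>x. if x = b then 1 else 0) = (\<lambda>a. if a \<in> idx d I then X a b else 0)"
  using assms finite_idx[OF assms(2)] by (auto simp: op_apply_def if_distrib cong: if_cong)

lemma proj_absorb:
  assumes finI: "finite I" and P: "is_orth_proj d I P" and Q: "op_supported d I Q"
    and R: "op_range d I Q \<subseteq> op_range d I P"
  shows "op_mult d I P Q = Q"
proof (rule ext, rule ext)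
  fix a b
  show "op_mult d I P Q a b = Q a b"
  proof (cases "a \<in> idx d I \<and> b \<in> idx d I")
    case True
    let ?e = "\<lambda>x. if x = b then 1 else 0"
    have "op_apply d I Q ?e \<in> op_range d I P" using R by (auto simp: op_range_def)
    then obtain v where v: "op_apply d I Q ?e = op_apply d I P v" by (auto simp: op_range_def)
    have "op_apply d I (op_mult d I P Q) ?e = op_apply d I P (op_apply d I P v)"
      by (simp add: op_apply_mult v)
    also have "\<dots> = op_apply d I Q ?e"
      by (simp add: op_apply_mult[symmetric] orth_proj_idem[OF P] v)
    finally have "op_apply d I (op_mult d I P Q) ?e a = op_apply d I Q ?e a" by simp
    then show ?thesis using True finI by (simp add: apply_basis)
  next
    case False
    then show ?thesis using Q by (auto simp: op_mult_def op_supported_def)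
  qed
qed

lemma proj_unique:
  assumes finI: "finite I" and P: "is_orth_proj d I P" and Q: "is_orth_proj d I Q"
    and R: "op_range d I Q = op_range d I P"
  shows "P = Q"
proof -
  have 1: "op_mult d I P Q = Q" using proj_absorb[OF finI P orth_proj_supp[OF Q]] R by simp
  have 2: "op_mult d I Q P = P" using proj_absorb[OF finI Q orth_proj_supp[OF P]] R by simp
  have "P = adj P" using orth_proj_adj[OF P] by simp
  also have "\<dots> = adj (op_mult d I Q P)" using 2 by simp
  also have "\<dots> = op_mult d I (adj P) (adj Q)" by (simp add: adj_mult)
  also have "\<dots> = Q" using orth_proj_adj[OF P] orth_proj_adj[OF Q] 1 by simp
  finally show ?thesis .
qed

lemma im_proj_props:
  assumes finI: "finite I" and A: "op_supported d I A"
  shows "is_orth_proj d I (im_proj d I A) \<and> op_mult d I (im_proj d I A) A = A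
     \<and> (\<exists>N. im_proj d I A = op_mult d I A N)"
proof -
  obtain P N where P: "is_orth_proj d I P" and PA: "\<forall>b\<in>idx d I. \<forall>a. op_mult d I P A a b = A a b"
    and PN: "P = op_mult d I A N"
    using gs[OF finI A finite_idx[OF finI] subset_refl] by blast
  have PA': "op_mult d I P A = A"
  proof (rule ext, rule ext)
    fix a b show "op_mult d I P A a b = A a b"
      using PA A by (cases "b \<in> idx d I") (auto simp: op_mult_def op_supported_def)
  qed
  have rng: "op_range d I P = op_range d I A"
  proof
    show "op_range d I P \<subseteq> op_range d I A"
      by (auto simp: op_range_def PN op_apply_mult)
    show "op_range d I A \<subseteq> op_range d I P"
    proof
      fix y assume "y \<in> op_range d I A"
      then obtain v where "y = op_apply d I A v" by (auto simp: op_range_def)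
      then have "y = op_apply d I P (op_apply d I A v)" by (simp add: op_apply_mult[symmetric] PA')
      then show "y \<in> op_range d I P" by (auto simp: op_range_def)
    qed
  qed
  have "im_proj d I A = P"
    unfolding im_proj_def
  proof (rule the_equality)
    show "is_orth_proj d I P \<and> op_range d I P = op_range d I A" using P rng by simp
    fix Q assume "is_orth_proj d I Q \<and> op_range d I Q = op_range d I A"
    then show "Q = P" using proj_unique[OF finI _ P] rng by auto
  qed
  then show ?thesis using P PA' PN by auto
qed

lemma swap4: "(\<Sum>a\<in>A. \<Sum>b\<in>B. \<Sum>c\<in>C. \<Sum>e\<in>E. f a b c e) = (\<Sum>c\<in>C. \<Sum>e\<in>E. \<Sum>a\<in>A. \<Sum>b\<in>B. f a b c e)"
proof -
  have "(\<Sum>a\<in>A. \<Sum>b\<in>B. \<Sum>c\<in>C. \<Sum>e\<in>E. f a b c e) = (\<Sum>a\<in>A. \<Sum>c\<in>C. \<Sum>b\<in>B. \<Sum>e\<in>E. f a b c e)"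
    by (rule sum.cong[OF refl], rule sum.swap)
  also have "\<dots> = (\<Sum>c\<in>C. \<Sum>a\<in>A. \<Sum>b\<in>B. \<Sum>e\<in>E. f a b c e)" by (rule sum.swap)
  also have "\<dots> = (\<Sum>c\<in>C. \<Sum>a\<in>A. \<Sum>e\<in>E. \<Sum>b\<in>B. f a b c e)"
    by (rule sum.cong[OF refl], rule sum.cong[OF refl], rule sum.swap)
  also have "\<dots> = (\<Sum>c\<in>C. \<Sum>e\<in>E. \<Sum>a\<in>A. \<Sum>b\<in>B. f a b c e)"
    by (rule sum.cong[OF refl], rule sum.swap)
  finally show ?thesis .
qed

lemma idx_empty: "idx d {} = {(\<lambda>i. 0)}"
  by (auto simp: idx_def)

lemma zero_plus_fun: "(\<lambda>i. 0::nat) + c = c"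
  by (simp add: plus_fun_def)

lemma sandwich:
  assumes finI: "finite I" and P: "is_orth_proj d I P"
    and f: "\<And>a. a \<in> idx d I \<Longrightarrow> (\<Sum>a'\<in>idx d I. P a a' * f a') = f a"
    and g: "\<And>a. a \<in> idx d I \<Longrightarrow> (\<Sum>a'\<in>idx d I. P a a' * g a') = g a"
  shows "(\<Sum>a\<in>idx d I. \<Sum>a'\<in>idx d I. cnj (f a) * op_mult d I P (op_mult d I X P) a a' * g a')
       = (\<Sum>a\<in>idx d I. \<Sum>a'\<in>idx d I. cnj (f a) * X a a' * g a')"
proof -
  let ?S = "idx d I"
  have Pg: "op_apply d I P g = (\<lambda>a. if a \<in> ?S then g a else 0)"
    using g by (auto simp: op_apply_def)
  have Xg: "op_apply d I X (op_apply d I P g) = op_apply d I X g"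
    unfolding Pg by (auto simp: op_apply_def intro!: sum.cong)
  have "(\<Sum>a\<in>?S. \<Sum>a'\<in>?S. cnj (f a) * op_mult d I P (op_mult d I X P) a a' * g a')
      = (\<Sum>a\<in>?S. cnj (f a) * op_apply d I (op_mult d I P (op_mult d I X P)) g a)"
    by (auto simp: op_apply_def sum_distrib_left mult.assoc intro!: sum.cong)
  also have "\<dots> = (\<Sum>a\<in>?S. cnj (f a) * op_apply d I P (op_apply d I X g) a)"
    by (simp add: op_apply_mult Xg)
  also have "\<dots> = (\<Sum>a\<in>?S. \<Sum>b\<in>?S. cnj (f a) * P a b * op_apply d I X g b)"
    by (auto simp: op_apply_def sum_distrib_left mult.assoc intro!: sum.cong)
  also have "\<dots> = (\<Sum>b\<in>?S. (\<Sum>a\<in>?S. cnj (f a) * P a b) * op_apply d I X g b)"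
    by (subst sum.swap) (simp add: sum_distrib_right)
  also have "\<dots> = (\<Sum>b\<in>?S. cnj (f b) * op_apply d I X g b)"
  proof (rule sum.cong[OF refl])
    fix b assume b: "b \<in> ?S"
    have "(\<Sum>a\<in>?S. cnj (f a) * P a b) = cnj (op_apply d I P f b)" by (rule cnj_P_sum[OF P b])
    also have "op_apply d I P f b = f b" using f[OF b] b by (simp add: op_apply_def)
    finally show "(\<Sum>a\<in>?S. cnj (f a) * P a b) * op_apply d I X g b = cnj (f b) * op_apply d I X g b"
      by simp
  qed
  also have "\<dots> = (\<Sum>a\<in>?S. \<Sum>a'\<in>?S. cnj (f a) * X a a' * g a')"
    by (auto simp: op_apply_def sum_distrib_left mult.assoc intro!: sum.cong)
  finally show ?thesis .
qed

locale ent =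
  fixes n :: nat and d :: "nat \<Rightarrow> nat" and \<psi> :: "(nat \<Rightarrow> nat) \<Rightarrow> complex"
  assumes norm1: "(\<Sum>a\<in>idx d {1..n}. (cmod (\<psi> a))\<^sup>2) = 1"
begin

abbreviation "NN \<equiv> {1..n}"
abbreviation "PP I \<equiv> supp n d \<psi> I"
abbreviation "rho I \<equiv> rdm n d \<psi> I"

lemma NN_split: "I \<subseteq> NN \<Longrightarrow> I \<union> (NN - I) = NN" by auto

lemma rdm_formula:
  assumes I: "I \<subseteq> NN" and a: "a \<in> idx d I" and b: "b \<in> idx d I"
  shows "rho I a b = (\<Sum>c\<in>idx d (NN - I). \<psi> (a + c) * cnj (\<psi> (b + c)))"
proof -
  have "a + c \<in> idx d NN \<and> b + c \<in> idx d NN" if c: "c \<in> idx d (NN - I)" for c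
  proof -
    have "a + c \<in> idx d (I \<union> (NN - I))" "b + c \<in> idx d (I \<union> (NN - I))"
      by (rule idx_add[OF a c], blast) (rule idx_add[OF b c], blast)
    then show ?thesis unfolding NN_split[OF I] by blast
  qed
  then have dd: "\<And>c. c \<in> idx d (NN - I) \<Longrightarrow> dens n d \<psi> (a + c) (b + c) = \<psi> (a + c) * cnj (\<psi> (b + c))"
    by (simp add: dens_def)
  have "rho I a b = (\<Sum>c\<in>idx d (NN - I). dens n d \<psi> (\<lambda>i. a i + c i) (\<lambda>i. b i + c i))"
    using a b by (simp add: rdm_def)
  also have "\<dots> = (\<Sum>c\<in>idx d (NN - I). dens n d \<psi> (a + c) (b + c))"
    by (simp add: plus_fun_def)
  also have "\<dots> = (\<Sum>c\<in>idx d (NN - I). \<psi> (a + c) * cnj (\<psi> (b + c)))"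
    by (rule sum.cong[OF refl dd])
  finally show ?thesis .
qed

lemma rdm_supported: "op_supported d I (rho I)"
  by (simp add: op_supported_def rdm_def)

lemma finite_sub: "I \<subseteq> NN \<Longrightarrow> finite I"
  using finite_subset by blast

lemma P_props:
  assumes "I \<subseteq> NN"
  shows "is_orth_proj d I (PP I) \<and> op_mult d I (PP I) (rho I) = rho I \<and> (\<exists>N. PP I = op_mult d I (rho I) N)"
  unfolding supp_def using im_proj_props[OF finite_sub[OF assms] rdm_supported] .

lemma P_proj: "I \<subseteq> NN \<Longrightarrow> is_orth_proj d I (PP I)"
  using P_props by blast

lemma absorb:
  assumes I: "I \<subseteq> NN" and a: "a \<in> idx d I" and c: "c \<in> idx d (NN - I)"
  shows "(\<Sum>a'\<in>idx d I. PP I a a' * \<psi> (a' + c)) = \<psi> (a + c)"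
proof -
  let ?S = "idx d I" and ?K = "idx d (NN - I)"
  let ?P = "PP I"
  have finS: "finite ?S" by (rule finite_idx[OF finite_sub[OF I]])
  have finK: "finite ?K" by (rule finite_idx) (use finite_sub[OF I] in auto)
  define R where "R a c = \<psi> (a + c) - (\<Sum>a'\<in>?S. ?P a a' * \<psi> (a' + c))" for a c
  have Prho: "op_mult d I ?P (rho I) = rho I" using P_props[OF I] by blast
  have Pproj: "is_orth_proj d I ?P" using P_props[OF I] by blast
  have step1: "(\<Sum>c\<in>?K. R a c * cnj (\<psi> (b + c))) = 0" if a: "a \<in> ?S" and b: "b \<in> ?S" for a b
  proof -
    have "(\<Sum>c\<in>?K. R a c * cnj (\<psi> (b + c)))
        = rho I a b - (\<Sum>c\<in>?K. \<Sum>a'\<in>?S. ?P a a' * \<psi> (a' + c) * cnj (\<psi> (b + c)))"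
      by (simp add: R_def left_diff_distrib sum_subtractf rdm_formula[OF I a b] sum_distrib_right)
    also have "(\<Sum>c\<in>?K. \<Sum>a'\<in>?S. ?P a a' * \<psi> (a' + c) * cnj (\<psi> (b + c)))
        = (\<Sum>a'\<in>?S. ?P a a' * rho I a' b)"
      by (subst sum.swap) (auto simp: rdm_formula[OF I _ b] sum_distrib_left mult.assoc intro!: sum.cong)
    also have "\<dots> = op_mult d I ?P (rho I) a b" using a b by (simp add: op_mult_def)
    also have "\<dots> = rho I a b" by (simp add: Prho)
    finally show ?thesis by (simp add: plus_fun_def)
  qed
  have step2: "(\<Sum>c\<in>?K. R a c * cnj (R a c)) = 0" if a: "a \<in> ?S" for a
  proof -
    have "(\<Sum>c\<in>?K. R a c * cnj (R a c)) = (\<Sum>c\<in>?K. R a c * cnj (\<psi> (a + c)))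
        - (\<Sum>c\<in>?K. \<Sum>a'\<in>?S. cnj (?P a a') * (R a c * cnj (\<psi> (a' + c))))"
      unfolding R_def[of a]
      by (simp add: right_diff_distrib sum_subtractf sum_distrib_left mult_ac)
    also have "(\<Sum>c\<in>?K. \<Sum>a'\<in>?S. cnj (?P a a') * (R a c * cnj (\<psi> (a' + c))))
        = (\<Sum>a'\<in>?S. cnj (?P a a') * (\<Sum>c\<in>?K. R a c * cnj (\<psi> (a' + c))))"
      by (subst sum.swap) (simp add: sum_distrib_left)
    also have "\<dots> = 0" using step1[OF a] by simp
    finally show ?thesis using step1[OF a a] by (simp add: plus_fun_def)
  qed
  have "(\<Sum>c\<in>?K. (cmod (R a c))\<^sup>2) = 0"
  proof -
    have "complex_of_real (\<Sum>c\<in>?K. (cmod (R a c))\<^sup>2) = (\<Sum>c\<in>?K. R a c * cnj (R a c))"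
      unfolding of_real_sum by (rule sum.cong) (simp_all add: complex_norm_square del: of_real_power)
    then show ?thesis using step2[OF a] of_real_eq_0_iff by metis
  qed
  then have "\<forall>c\<in>?K. (cmod (R a c))\<^sup>2 = 0"
    using sum_nonneg_eq_0_iff[OF finK, of "\<lambda>c. (cmod (R a c))\<^sup>2"] by simp
  then have "R a c = 0" using c by simp
  then show ?thesis by (simp add: R_def)
qed

lemma psi_nonzero: "\<exists>x\<in>idx d NN. \<psi> x \<noteq> 0"
proof (rule ccontr)
  assume "\<not> ?thesis"
  then have "(\<Sum>a\<in>idx d NN. (cmod (\<psi> a))\<^sup>2) = 0" by simp
  then show False using norm1 by simp
qed

lemma P_empty: "PP {} = (\<lambda>a b. if a = (\<lambda>i. 0) \<and> b = (\<lambda>i. 0) then 1 else 0)"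
proof -
  obtain x where x: "x \<in> idx d NN" "\<psi> x \<noteq> 0" using psi_nonzero by blast
  have "(\<Sum>a'\<in>idx d {}. PP {} (\<lambda>i. 0) a' * \<psi> (a' + x)) = \<psi> ((\<lambda>i. 0) + x)"
    by (rule absorb) (use x in \<open>auto simp: idx_empty\<close>)
  then have "PP {} (\<lambda>i. 0) (\<lambda>i. 0) * \<psi> x = \<psi> x" by (simp add: idx_empty zero_plus_fun)
  then have p1: "PP {} (\<lambda>i. 0) (\<lambda>i. 0) = 1" using x(2) by simp
  have sup: "op_supported d {} (PP {})" using P_proj[of "{}"] orth_proj_supp by blast
  show ?thesis
  proof (rule ext, rule ext)
    fix a b show "PP {} a b = (if a = (\<lambda>i. 0) \<and> b = (\<lambda>i. 0) then 1 else 0)"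
      using p1 sup by (auto simp: op_supported_def idx_empty)
  qed
qed

lemma dens_cnj: "cnj (dens n d \<psi> y x) = dens n d \<psi> x y"
  by (simp add: dens_def mult.commute)

lemma rho_adj: "adj (rho I) = rho I"
  by (rule ext)+ (auto simp: adj_def rdm_def dens_cnj)

lemma sandwich_zero:
  assumes I: "I \<subseteq> NN"
    and L: "\<And>c c'. c \<in> idx d (NN - I) \<Longrightarrow> c' \<in> idx d (NN - I) \<Longrightarrow>
       (\<Sum>a\<in>idx d I. \<Sum>a'\<in>idx d I. cnj (\<psi> (a + c)) * W a a' * \<psi> (a' + c')) = 0"
  shows "op_mult d I (PP I) (op_mult d I W (PP I)) = 0"
proof -
  let ?S = "idx d I" and ?K = "idx d (NN - I)"
  obtain N where N: "PP I = op_mult d I (rho I) N" using P_props[OF I] by blast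
  have Pa: "adj (PP I) = PP I" using orth_proj_adj P_proj[OF I] by blast
  have P2: "PP I = op_mult d I (adj N) (rho I)"
    using Pa N by (metis adj_mult rho_adj)
  have rWr: "op_mult d I (rho I) (op_mult d I W (rho I)) = 0"
  proof (rule ext, rule ext)
    fix a b
    show "op_mult d I (rho I) (op_mult d I W (rho I)) a b = 0 a b"
    proof (cases "a \<in> ?S \<and> b \<in> ?S")
      case True
      then have a: "a \<in> ?S" and b: "b \<in> ?S" by auto
      have "op_mult d I (rho I) (op_mult d I W (rho I)) a b
          = (\<Sum>a1\<in>?S. \<Sum>a2\<in>?S. rho I a a1 * W a1 a2 * rho I a2 b)"
        using True by (simp add: op_mult_def sum_distrib_left mult.assoc)
      also have "\<dots> = (\<Sum>a1\<in>?S. \<Sum>a2\<in>?S. \<Sum>c\<in>?K. \<Sum>c'\<in>?K.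
            \<psi> (a + c) * (cnj (\<psi> (a1 + c)) * W a1 a2 * \<psi> (a2 + c')) * cnj (\<psi> (b + c')))"
      proof (intro sum.cong refl)
        fix a1 a2 assume a1: "a1 \<in> ?S" and a2: "a2 \<in> ?S"
        have "rho I a a1 * W a1 a2 * rho I a2 b =
          (\<Sum>c\<in>?K. \<psi> (a + c) * cnj (\<psi> (a1 + c))) * W a1 a2 * (\<Sum>c'\<in>?K. \<psi> (a2 + c') * cnj (\<psi> (b + c')))"
          using rdm_formula[OF I a a1] rdm_formula[OF I a2 b] by simp
        also have "\<dots> = (\<Sum>c\<in>?K. \<Sum>c'\<in>?K. \<psi> (a + c) * cnj (\<psi> (a1 + c)) * W a1 a2 * (\<psi> (a2 + c') * cnj (\<psi> (b + c'))))"
          by (simp add: sum_distrib_left sum_distrib_right, rule sum.swap)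
        also have "\<dots> = (\<Sum>c\<in>?K. \<Sum>c'\<in>?K. \<psi> (a + c) * (cnj (\<psi> (a1 + c)) * W a1 a2 * \<psi> (a2 + c')) * cnj (\<psi> (b + c')))"
          by (intro sum.cong refl) (simp add: mult.assoc)
        finally show "rho I a a1 * W a1 a2 * rho I a2 b = (\<Sum>c\<in>?K. \<Sum>c'\<in>?K. \<psi> (a + c) * (cnj (\<psi> (a1 + c)) * W a1 a2 * \<psi> (a2 + c')) * cnj (\<psi> (b + c')))" .
      qed
      also have "\<dots> = (\<Sum>c\<in>?K. \<Sum>c'\<in>?K. \<Sum>a1\<in>?S. \<Sum>a2\<in>?S.
            \<psi> (a + c) * (cnj (\<psi> (a1 + c)) * W a1 a2 * \<psi> (a2 + c')) * cnj (\<psi> (b + c')))"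
        by (rule swap4)
      also have "\<dots> = (\<Sum>c\<in>?K. \<Sum>c'\<in>?K. \<psi> (a + c) * (\<Sum>a1\<in>?S. \<Sum>a2\<in>?S.
            cnj (\<psi> (a1 + c)) * W a1 a2 * \<psi> (a2 + c')) * cnj (\<psi> (b + c')))"
        by (simp add: sum_distrib_left sum_distrib_right)
      also have "\<dots> = 0" using L by simp
      finally show ?thesis by simp
    qed (auto simp: op_mult_def)
  qed
  have "op_mult d I (PP I) (op_mult d I W (PP I))
      = op_mult d I (adj N) (op_mult d I (op_mult d I (rho I) (op_mult d I W (rho I))) N)"
    apply (subst P2) apply (subst N)
    by (simp add: op_mult_assoc)
  also have "\<dots> = 0" by (simp add: rWr)
  finally show ?thesis .
qed

end

lemma stensor_rs:
  assumes j: "j \<notin> J" and x: "x \<in> idx d M" and x': "x' \<in> idx d M" and M: "insert j J \<subseteq> M"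
  shows "stensor d j J X (rs (insert j J) x) (rs (insert j J) x')
       = (-1) ^ card {i\<in>J. i < j} * (if x j = x' j then X (rs J x) (rs J x') else 0)"
proof -
  have m: "rs (insert j J) x \<in> idx d (insert j J)" "rs (insert j J) x' \<in> idx d (insert j J)"
    using rs_idx'[OF x M] rs_idx'[OF x' M] by auto
  have r: "(rs (insert j J) y)(j := 0) = rs J y" for y
    using j by (auto simp: rs_def fun_eq_iff)
  have v: "rs (insert j J) y j = y j" for y by (simp add: rs_def)
  show ?thesis using m unfolding stensor_def by (simp add: r v)
qed

lemma sum_delta2:
  assumes "finite K" "c0 \<in> K" "c0' \<in> K"
  shows "(\<Sum>c\<in>K. \<Sum>c'\<in>K. (if c = c0 \<and> c' = c0' then 1 else 0) * L c c') = (L c0 c0' :: complex)"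
proof -
  have "(\<Sum>c'\<in>K. (if c = c0 \<and> c' = c0' then 1 else 0) * L c c') = (if c = c0 then L c c0' else 0)" for c
  proof -
    have "(\<Sum>c'\<in>K. (if c = c0 \<and> c' = c0' then 1 else 0) * L c c') =
      (\<Sum>c'\<in>K. if c' = c0' then (if c = c0 then L c c' else 0) else 0)"
      by (rule sum.cong) auto
    then show ?thesis using assms by simp
  qed
  then have "(\<Sum>c\<in>K. \<Sum>c'\<in>K. (if c = c0 \<and> c' = c0' then 1 else 0) * L c c') =
     (\<Sum>c\<in>K. if c = c0 then L c c0' else 0)" by simp
  then show ?thesis using assms by simp
qed

context ent
begin

definition pr :: "nat set \<Rightarrow> op \<Rightarrow> op \<Rightarrow> complex" where
  "pr I A B = (\<Sum>x\<in>idx d NN. \<Sum>x'\<in>idx d NN.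
      cnj (\<psi> x) * A (rs I x) (rs I x') * B (rs (NN - I) x) (rs (NN - I) x') * \<psi> x')"

lemma sum_NN_split:
  assumes I: "I \<subseteq> NN"
  shows "(\<Sum>x\<in>idx d NN. F x) = (\<Sum>a\<in>idx d I. \<Sum>c\<in>idx d (NN - I). F (a + c))"
proof -
  have "(\<Sum>x\<in>idx d (I \<union> (NN - I)). F x) = (\<Sum>a\<in>idx d I. \<Sum>c\<in>idx d (NN - I). F (a + c))"
    by (rule sum_idx_split) (use finite_sub[OF I] in auto)
  then show ?thesis using NN_split[OF I] by simp
qed

lemma pr_split:
  assumes I: "I \<subseteq> NN"
  shows "pr I A B = (\<Sum>c\<in>idx d (NN - I). \<Sum>c'\<in>idx d (NN - I). B c c' *
     (\<Sum>a\<in>idx d I. \<Sum>a'\<in>idx d I. cnj (\<psi> (a + c)) * A a a' * \<psi> (a' + c')))"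
proof -
  let ?S = "idx d I" and ?K = "idx d (NN - I)"
  have disj: "I \<inter> (NN - I) = {}" by auto
  have "pr I A B = (\<Sum>a\<in>?S. \<Sum>c\<in>?K. \<Sum>a'\<in>?S. \<Sum>c'\<in>?K.
      cnj (\<psi> (a + c)) * A (rs I (a + c)) (rs I (a' + c')) * B (rs (NN - I) (a + c)) (rs (NN - I) (a' + c')) * \<psi> (a' + c'))"
    unfolding pr_def sum_NN_split[OF I] ..
  also have "\<dots> = (\<Sum>a\<in>?S. \<Sum>c\<in>?K. \<Sum>a'\<in>?S. \<Sum>c'\<in>?K.
      cnj (\<psi> (a + c)) * A a a' * B c c' * \<psi> (a' + c'))"
    by (intro sum.cong refl) (simp only: rs_add1[OF _ _ disj] rs_add2[OF _ _ disj])
  also have "\<dots> = (\<Sum>a\<in>?S. \<Sum>a'\<in>?S. \<Sum>c\<in>?K. \<Sum>c'\<in>?K.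
      cnj (\<psi> (a + c)) * A a a' * B c c' * \<psi> (a' + c'))"
    by (rule sum.cong[OF refl], rule sum.swap)
  also have "\<dots> = (\<Sum>c\<in>?K. \<Sum>c'\<in>?K. \<Sum>a\<in>?S. \<Sum>a'\<in>?S.
      cnj (\<psi> (a + c)) * A a a' * B c c' * \<psi> (a' + c'))"
    by (rule swap4)
  also have "\<dots> = (\<Sum>c\<in>?K. \<Sum>c'\<in>?K. B c c' *
     (\<Sum>a\<in>?S. \<Sum>a'\<in>?S. cnj (\<psi> (a + c)) * A a a' * \<psi> (a' + c')))"
    by (simp add: sum_distrib_left mult_ac)
  finally show ?thesis .
qed

lemma pr_sym:
  assumes I: "I \<subseteq> NN"
  shows "pr I A B = pr (NN - I) B A"
proof -
  have e: "NN - (NN - I) = I" using I by auto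
  show ?thesis unfolding pr_def e by (simp add: mult_ac)
qed

lemma pr_restr_left:
  assumes I: "I \<subseteq> NN"
  shows "pr I (restr n d \<psi> I X) B = pr I X B"
proof -
  have inner: "(\<Sum>a\<in>idx d I. \<Sum>a'\<in>idx d I. cnj (\<psi> (a + c)) * restr n d \<psi> I X a a' * \<psi> (a' + c')) =
        (\<Sum>a\<in>idx d I. \<Sum>a'\<in>idx d I. cnj (\<psi> (a + c)) * X a a' * \<psi> (a' + c'))"
    if c: "c \<in> idx d (NN - I)" and c': "c' \<in> idx d (NN - I)" for c c'
    unfolding restr_def
    by (rule sandwich[OF finite_sub[OF I] P_proj[OF I], where f="\<lambda>a. \<psi> (a + c)" and g="\<lambda>a. \<psi> (a + c')" and X=X])
       (simp_all add: absorb[OF I _ c] absorb[OF I _ c'])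
  show ?thesis unfolding pr_split[OF I]
    by (intro sum.cong refl) (simp only: inner)
qed

lemma pr_restr_right:
  assumes I: "I \<subseteq> NN"
  shows "pr I A (restr n d \<psi> (NN - I) Y) = pr I A Y"
proof -
  have I': "NN - I \<subseteq> NN" by auto
  have e: "NN - (NN - I) = I" using I by auto
  have "pr I A (restr n d \<psi> (NN - I) Y) = pr (NN - I) (restr n d \<psi> (NN - I) Y) A"
    by (rule pr_sym[OF I])
  also have "\<dots> = pr (NN - I) Y A" by (rule pr_restr_left[OF I'])
  also have "\<dots> = pr I A Y" using pr_sym[OF I', of Y A] e by simp
  finally show ?thesis .
qed

lemma pr_add_left: "pr I (A + A') B = pr I A B + pr I A' B"
  by (simp add: pr_def distrib_left distrib_right sum.distrib)

lemma pr_add_right: "pr I A (B + B') = pr I A B + pr I A B'"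
  by (simp add: pr_def distrib_left distrib_right sum.distrib)

lemma pr_scale_left: "pr I (\<lambda>a b. c * A a b) B = c * pr I A B"
  by (simp add: pr_def sum_distrib_left mult_ac)

lemma pr_scale_right: "pr I A (\<lambda>a b. c * B a b) = c * pr I A B"
  by (simp add: pr_def sum_distrib_left mult_ac)

lemma pr_zero_left: "pr I 0 B = 0"
  by (simp add: pr_def)

lemma pr_zero_right: "pr I A 0 = 0"
  by (simp add: pr_def)

lemma pr_sum_left: "pr I (\<lambda>a b. \<Sum>j\<in>J. F j a b) B = (\<Sum>j\<in>J. pr I (F j) B)"
proof -
  have "pr I (\<lambda>a b. \<Sum>j\<in>J. F j a b) B = (\<Sum>x\<in>idx d NN. \<Sum>x'\<in>idx d NN. \<Sum>j\<in>J.
      cnj (\<psi> x) * F j (rs I x) (rs I x') * B (rs (NN - I) x) (rs (NN - I) x') * \<psi> x')"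
    by (simp add: pr_def sum_distrib_left sum_distrib_right)
  also have "\<dots> = (\<Sum>j\<in>J. pr I (F j) B)"
    unfolding pr_def by (simp add: sum.swap[of _ J])
  finally show ?thesis .
qed

lemma pr_sum_right: "pr I A (\<lambda>a b. \<Sum>j\<in>J. F j a b) = (\<Sum>j\<in>J. pr I A (F j))"
proof -
  have "pr I A (\<lambda>a b. \<Sum>j\<in>J. F j a b) = (\<Sum>x\<in>idx d NN. \<Sum>x'\<in>idx d NN. \<Sum>j\<in>J.
      cnj (\<psi> x) * A (rs I x) (rs I x') * F j (rs (NN - I) x) (rs (NN - I) x') * \<psi> x')"
    by (simp add: pr_def sum_distrib_left sum_distrib_right)
  also have "\<dots> = (\<Sum>j\<in>J. pr I A (F j))"
    unfolding pr_def by (simp add: sum.swap[of _ J])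
  finally show ?thesis .
qed

lemma restr_idem:
  assumes I: "I \<subseteq> NN"
  shows "op_mult d I (PP I) (op_mult d I (restr n d \<psi> I X) (PP I)) = restr n d \<psi> I X"
proof -
  have idem: "op_mult d I (PP I) (PP I) = PP I" using orth_proj_idem[OF P_proj[OF I]] .
  have idem2: "op_mult d I (PP I) (op_mult d I (PP I) Z) = op_mult d I (PP I) Z" for Z
    by (simp add: op_mult_assoc[symmetric] idem)
  show ?thesis unfolding restr_def by (simp add: op_mult_assoc idem idem2)
qed

lemma nondeg_comp:
  assumes I: "I \<subseteq> NN" and nz: "restr n d \<psi> I X \<noteq> 0"
  shows "\<exists>Y. pr I (restr n d \<psi> I X) (restr n d \<psi> (NN - I) Y) \<noteq> 0"
proof (rule ccontr)
  let ?w = "restr n d \<psi> I X" and ?K = "idx d (NN - I)"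
  assume "\<not> ?thesis"
  then have all0: "\<And>Y. pr I ?w Y = 0" using pr_restr_right[OF I] by auto
  have finK: "finite ?K" by (rule finite_idx) (use finite_sub[OF I] in auto)
  have "(\<Sum>a\<in>idx d I. \<Sum>a'\<in>idx d I. cnj (\<psi> (a + c0)) * ?w a a' * \<psi> (a' + c0')) = 0"
    if c0: "c0 \<in> ?K" and c0': "c0' \<in> ?K" for c0 c0'
  proof -
    let ?Y = "\<lambda>c c'. if c = c0 \<and> c' = c0' then 1 else (0::complex)"
    have "pr I ?w ?Y = (\<Sum>a\<in>idx d I. \<Sum>a'\<in>idx d I. cnj (\<psi> (a + c0)) * ?w a a' * \<psi> (a' + c0'))"
      unfolding pr_split[OF I] by (rule sum_delta2[OF finK c0 c0'])
    then show ?thesis using all0 by simp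
  qed
  then have "op_mult d I (PP I) (op_mult d I ?w (PP I)) = 0" by (rule sandwich_zero[OF I])
  then have "?w = 0" using restr_idem[OF I] by simp
  then show False using nz by simp
qed

end

context vector_space
begin

lemma span_image_lin:
  assumes add: "\<And>x y. f (x + y) = f x + f y" and sc: "\<And>c x. f (scale c x) = scale c (f x)"
  shows "x \<in> span S \<Longrightarrow> f x \<in> span (f ` S)"
proof -
  have f0: "f 0 = 0" using add[of 0 0] by (metis add_cancel_right_right add_0)
  assume "x \<in> span S"
  then show "f x \<in> span (f ` S)"
  proof (induction rule: span_induct_alt)
    case base then show ?case by (simp add: f0 span_zero)
  next
    case (step c x y) then show ?case
      by (simp add: add sc span_add span_scale span_base)
  qed
qed

lemma findim_basis:
  assumes "finite G" "W \<subseteq> span G"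
  obtains B where "finite B" "B \<subseteq> W" "independent B" "W \<subseteq> span B" "card B = dim W"
proof -
  obtain B where B: "B \<subseteq> W" "independent B" "W \<subseteq> span B" "card B = dim W"
    by (rule basis_exists)
  have "finite B" using independent_span_bound[OF assms(1) B(2)] B(1) assms(2) by blast
  then show ?thesis using B that by blast
qed

lemma core_bound:
  fixes \<phi> :: "'e \<Rightarrow> 'b \<Rightarrow> 'a"
  assumes "finite E"
  shows "subspace X \<Longrightarrow> (\<forall>e\<in>E. \<forall>x\<in>X. \<forall>y\<in>X. \<phi> e (x + y) = \<phi> e x + \<phi> e y)
    \<Longrightarrow> (\<forall>e\<in>E. \<forall>x\<in>X. \<forall>c. \<phi> e (scale c x) = c * \<phi> e x)
    \<Longrightarrow> (\<forall>x\<in>X. (\<forall>e\<in>E. \<phi> e x = 0) \<longrightarrow> x = 0)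
    \<Longrightarrow> \<exists>B. finite B \<and> card B \<le> card E \<and> B \<subseteq> X \<and> X \<subseteq> span B"
  using assms
proof (induction E arbitrary: X rule: finite_induct)
  case empty
  then have "X \<subseteq> span {}" by (auto simp: span_empty)
  then show ?case by (intro exI[of _ "{}"]) auto
next
  case (insert e E)
  let ?X' = "{x\<in>X. \<phi> e x = 0}"
  have add: "\<And>x y. x \<in> X \<Longrightarrow> y \<in> X \<Longrightarrow> \<phi> e (x + y) = \<phi> e x + \<phi> e y"
    using insert.prems(2) by blast
  have sc: "\<And>x c. x \<in> X \<Longrightarrow> \<phi> e (scale c x) = c * \<phi> e x"
    using insert.prems(3) by blast
  have subX: "subspace X" by fact
  have sub': "subspace ?X'"
    unfolding subspace_def
  proof (intro conjI ballI allI)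
    have "\<phi> e (0 + 0) = \<phi> e 0 + \<phi> e 0" using add[of 0 0] subspace_0[OF subX] by blast
    then have "\<phi> e 0 = 0" by (metis add_cancel_right_right add_0)
    then show "0 \<in> ?X'" using subX by (simp add: subspace_0)
  next
    fix x y assume "x \<in> ?X'" "y \<in> ?X'"
    then show "x + y \<in> ?X'" using subX add by (simp add: subspace_add)
  next
    fix c x assume "x \<in> ?X'"
    then show "scale c x \<in> ?X'" using subX sc by (simp add: subspace_scale)
  qed
  have "\<exists>B. finite B \<and> card B \<le> card E \<and> B \<subseteq> ?X' \<and> ?X' \<subseteq> span B"
  proof (rule insert.IH[OF sub'])
    show "\<forall>e\<in>E. \<forall>x\<in>?X'. \<forall>y\<in>?X'. \<phi> e (x + y) = \<phi> e x + \<phi> e y"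
      using insert.prems(2) by blast
    show "\<forall>e\<in>E. \<forall>x\<in>?X'. \<forall>c. \<phi> e (scale c x) = c * \<phi> e x"
      using insert.prems(3) by blast
    show "\<forall>x\<in>?X'. (\<forall>e\<in>E. \<phi> e x = 0) \<longrightarrow> x = 0"
      using insert.prems(4) by blast
  qed
  then obtain B' where B': "finite B'" "card B' \<le> card E" "B' \<subseteq> ?X'" "?X' \<subseteq> span B'" by blast
  show ?case
  proof (cases "\<forall>x\<in>X. \<phi> e x = 0")
    case True
    then have "?X' = X" by auto
    then show ?thesis using B' insert.hyps by (intro exI[of _ B']) auto
  next
    case False
    then obtain x0 where x0: "x0 \<in> X" "\<phi> e x0 \<noteq> 0" by blast
    have "X \<subseteq> span (insert x0 B')"
    proof
      fix x assume x: "x \<in> X"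
      define t where "t = \<phi> e x / \<phi> e x0"
      have m: "scale (- t) x0 \<in> X" using subspace_scale[OF subX x0(1), of "-t"] .
      have xm: "x + scale (- t) x0 \<in> X" by (rule subspace_add[OF subX x m])
      have "\<phi> e (x + scale (- t) x0) = \<phi> e x + (- t) * \<phi> e x0"
        using add[OF x m] sc[OF x0(1), of "-t"] by simp
      also have "\<dots> = 0" using x0(2) by (simp add: t_def)
      finally have "x + scale (- t) x0 \<in> ?X'" using xm by blast
      then have "x + scale (- t) x0 \<in> span B'" using B' by blast
      then have "x + scale (- t) x0 \<in> span (insert x0 B')" by (meson span_mono subset_insertI subsetD)
      moreover have "scale t x0 \<in> span (insert x0 B')" by (simp add: span_base span_scale)
      ultimately have "(x + scale (- t) x0) + scale t x0 \<in> span (insert x0 B')" by (rule span_add)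
      moreover have "(x + scale (- t) x0) + scale t x0 = x" by (simp add: scale_minus_left)
      ultimately show "x \<in> span (insert x0 B')" by simp
    qed
    moreover have "card (insert x0 B') \<le> card (insert e E)"
      using B' insert.hyps by (simp add: card_insert_if)
    moreover have "insert x0 B' \<subseteq> X" using B' x0 by auto
    ultimately show ?thesis using B' by (intro exI[of _ "insert x0 B'"]) auto
  qed
qed

lemma core_dim:
  fixes \<phi> :: "'e \<Rightarrow> 'b \<Rightarrow> 'a"
  assumes "finite E" "subspace X" "\<forall>e\<in>E. \<forall>x\<in>X. \<forall>y\<in>X. \<phi> e (x + y) = \<phi> e x + \<phi> e y"
    "\<forall>e\<in>E. \<forall>x\<in>X. \<forall>c. \<phi> e (scale c x) = c * \<phi> e x"
    "\<forall>x\<in>X. (\<forall>e\<in>E. \<phi> e x = 0) \<longrightarrow> x = 0"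
  shows "dim X \<le> card E"
proof -
  obtain B where "finite B" "card B \<le> card E" "X \<subseteq> span B"
    using core_bound[OF assms(1,2,3,4,5)] by blast
  then show ?thesis using dim_le_card[of X B] by linarith
qed

end

context vector_space begin
lemma rank_nullity:
  assumes V: "subspace V" and G: "finite G" "V \<subseteq> span G"
    and add: "\<And>x y. f (x + y) = f x + f y" and sc: "\<And>c x. f (scale c x) = scale c (f x)"
  shows "dim {x\<in>V. f x = 0} + dim (f ` V) = dim V"
proof -
  have f0: "f 0 = 0" using add[of 0 0] by simp
  have fdiff: "\<And>x y. f (x - y) = f x - f y"
    by (metis add add_diff_cancel diff_add_cancel)
  let ?K = "{x\<in>V. f x = 0}"
  have KG: "?K \<subseteq> span G" using G by auto
  obtain BK where BK: "finite BK" "BK \<subseteq> ?K" "independent BK" "?K \<subseteq> span BK" "card BK = dim ?K"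
    using findim_basis[OF G(1) KG] by blast
  have IG: "f ` V \<subseteq> span (f ` G)"
    using span_image_lin[OF add sc] G by blast
  obtain C where C: "finite C" "C \<subseteq> f ` V" "independent C" "f ` V \<subseteq> span C" "card C = dim (f ` V)"
    using findim_basis[OF _ IG] G by blast
  have "\<forall>y\<in>C. \<exists>x\<in>V. f x = y" using C by blast
  then obtain g where g: "\<And>y. y \<in> C \<Longrightarrow> g y \<in> V \<and> f (g y) = y" by metis
  have le1: "dim V \<le> dim ?K + dim (f ` V)"
  proof -
    have pre: "y \<in> span C \<Longrightarrow> \<exists>z\<in>span (g ` C). f z = y" for y
    proof (induction rule: span_induct_alt)
      case base then show ?case using f0 span_zero by blast
    next
      case (step c x y)
      then obtain z where z: "z \<in> span (g ` C)" "f z = y" by blast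
      have "scale c (g x) + z \<in> span (g ` C)"
        using step(1) z(1) by (simp add: span_add span_scale span_base)
      moreover have "f (scale c (g x) + z) = scale c x + y" using g step(1) z(2) by (simp add: add sc)
      ultimately show ?case by blast
    qed
    have "V \<subseteq> span (BK \<union> g ` C)"
    proof
      fix x assume x: "x \<in> V"
      then have "f x \<in> span C" using C by blast
      then obtain z where z: "z \<in> span (g ` C)" "f z = f x" using pre by blast
      have "g ` C \<subseteq> V" using g by auto
      then have "span (g ` C) \<subseteq> V" using V by (simp add: span_minimal)
      then have "x - z \<in> ?K" using z x V by (auto simp: subspace_diff fdiff)
      then have "x - z \<in> span (BK \<union> g ` C)" using BK by (meson span_mono sup_ge1 subsetD)
      moreover have "z \<in> span (BK \<union> g ` C)" using z by (meson span_mono sup_ge2 subsetD)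
      ultimately have "(x - z) + z \<in> span (BK \<union> g ` C)" by (rule span_add)
      then show "x \<in> span (BK \<union> g ` C)" by simp
    qed
    then have "dim V \<le> card (BK \<union> g ` C)" using BK C by (intro dim_le_card) auto
    also have "\<dots> \<le> card BK + card (g ` C)" by (rule card_Un_le)
    also have "\<dots> \<le> card BK + card C" using card_image_le[OF C(1)] by simp
    finally show ?thesis using BK C by simp
  qed
  have le2: "dim ?K + dim (f ` V) \<le> dim V"
  proof -
    obtain B where B: "BK \<subseteq> B" "B \<subseteq> V" "independent B" "V \<subseteq> span B"
      using maximal_independent_subset_extend[of BK V] BK by auto
    have finB: "finite B" using independent_span_bound[OF G(1) B(3)] B(2) G(2) by blast
    have cardB: "card B = dim V" using basis_card_eq_dim[OF B(2) B(4) B(3)] .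
    have "f ` V \<subseteq> span (f ` B)" using span_image_lin[OF add sc] B(4) by blast
    also have "f ` B \<subseteq> insert 0 (f ` (B - BK))" using BK by auto
    then have "span (f ` B) \<subseteq> span (f ` (B - BK))"
      by (metis span_insert_0 span_mono)
    finally have "dim (f ` V) \<le> card (f ` (B - BK))" using finB by (intro dim_le_card) auto
    also have "\<dots> \<le> card (B - BK)" using finB by (simp add: card_image_le)
    also have "\<dots> = card B - card BK" using B(1) BK(1) by (simp add: card_Diff_subset)
    finally have "dim (f ` V) \<le> card B - card BK" .
    moreover have "card BK \<le> card B" using card_mono[OF finB B(1)] .
    ultimately show ?thesis using cardB BK(5) by linarith
  qed
  show ?thesis using le1 le2 by simp
qed

end

declare One_nat_def [simp del]

lemma reindex_pairs:
  assumes M: "finite M"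
  shows "(\<Sum>I\<in>{I. I \<subseteq> M \<and> card I = Suc k}. \<Sum>j\<in>I. F (I - {j}) j)
       = (\<Sum>J\<in>{J. J \<subseteq> M \<and> card J = k}. \<Sum>j\<in>M - J. F J j)"
proof -
  let ?A = "{I. I \<subseteq> M \<and> card I = Suc k}" and ?B = "{J. J \<subseteq> M \<and> card J = k}"
  have finA: "finite ?A" by (rule finite_subset[of _ "Pow M"]) (use M in auto)
  have finB: "finite ?B" by (rule finite_subset[of _ "Pow M"]) (use M in auto)
  have fin_sub: "\<And>I. I \<subseteq> M \<Longrightarrow> finite I" using M finite_subset by blast
  have bij: "bij_betw (\<lambda>(I, j). (I - {j}, j)) (Sigma ?A (\<lambda>I. I)) (Sigma ?B (\<lambda>J. M - J))"
  proof (rule bij_betw_byWitness[where f' = "\<lambda>(J, j). (insert j J, j)"])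
    show "\<forall>p\<in>Sigma ?A (\<lambda>I. I). (case (case p of (I, j) \<Rightarrow> (I - {j}, j)) of (J, j) \<Rightarrow> (insert j J, j)) = p"
      by auto
    show "\<forall>p\<in>Sigma ?B (\<lambda>J. M - J). (case (case p of (J, j) \<Rightarrow> (insert j J, j)) of (I, j) \<Rightarrow> (I - {j}, j)) = p"
      by auto
    show "(\<lambda>(I, j). (I - {j}, j)) ` Sigma ?A (\<lambda>I. I) \<subseteq> Sigma ?B (\<lambda>J. M - J)"
      using fin_sub by auto
    show "(\<lambda>(J, j). (insert j J, j)) ` Sigma ?B (\<lambda>J. M - J) \<subseteq> Sigma ?A (\<lambda>I. I)"
      using fin_sub by auto
  qed
  have "(\<Sum>I\<in>?A. \<Sum>j\<in>I. F (I - {j}) j) = (\<Sum>p\<in>Sigma ?A (\<lambda>I. I). case_prod F ((\<lambda>(I, j). (I - {j}, j)) p))"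
    using finA fin_sub by (subst sum.Sigma) (auto simp: split_def)
  also have "\<dots> = (\<Sum>q\<in>Sigma ?B (\<lambda>J. M - J). case_prod F q)"
    by (rule sum.reindex_bij_betw[OF bij])
  also have "\<dots> = (\<Sum>J\<in>?B. \<Sum>j\<in>M - J. F J j)"
    using finB M by (subst sum.Sigma) (auto simp: split_def)
  finally show ?thesis .
qed

lemma sum_fun_apply: "(sum f A) x = sum (\<lambda>a. f a x) A"
  by (induction A rule: infinite_finite_induct) auto

lemma stensor_empty:
  "stensor d j {} X = (\<lambda>a b. X (\<lambda>i. 0) (\<lambda>i. 0) * (if a \<in> idx d {j} \<and> a = b then 1 else 0))"
proof (intro ext)
  fix a b
  show "stensor d j {} X a b = X (\<lambda>i. 0) (\<lambda>i. 0) * (if a \<in> idx d {j} \<and> a = b then 1 else 0)"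
  proof (cases "a \<in> idx d {j} \<and> b \<in> idx d {j}")
    case True
    then have "a(j := 0) = (\<lambda>i. 0)" "b(j := 0) = (\<lambda>i. 0)"
      by (auto simp: idx_def fun_eq_iff)
    moreover have "(a j = b j) = (a = b)"
    proof
      assume h: "a j = b j"
      show "a = b"
      proof
        fix x show "a x = b x" using True h by (cases "x = j") (auto simp: idx_def)
      qed
    qed simp
    ultimately show ?thesis using True by (simp add: stensor_def)
  next
    case False
    then show ?thesis by (auto simp: stensor_def)
  qed
qed

lemma stensor_add: "stensor d j J (X + Y) = stensor d j J X + stensor d j J Y"
  by (rule ext)+ (simp add: stensor_def distrib_left)

lemma stensor_scale: "stensor d j J (\<lambda>a b. c * X a b) = (\<lambda>a b. c * stensor d j J X a b)"
  by (rule ext)+ (simp add: stensor_def mult_ac)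

definition cscale' :: "complex \<Rightarrow> op \<Rightarrow> op" where "cscale' c X = (\<lambda>a b. c * X a b)"

context ent
begin

abbreviation "VV k \<equiv> eforms n d \<psi> k"
abbreviation "DD k \<equiv> cobound n d \<psi> k"

definition gd :: "nat \<Rightarrow> nat set \<Rightarrow> bool" where "gd k I \<longleftrightarrow> I \<subseteq> NN \<and> card I = k"

definition Sk :: "nat \<Rightarrow> nat set set" where "Sk k = {I. I \<subseteq> NN \<and> card I = k}"
definition eps :: "nat set \<Rightarrow> complex" where "eps I = (-1) ^ (\<Sum>I)"
definition sg :: "nat \<Rightarrow> nat set \<Rightarrow> complex" where "sg j J = (-1) ^ card {i\<in>J. i < j}"
definition Bk :: "nat \<Rightarrow> eform \<Rightarrow> eform \<Rightarrow> complex" where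
  "Bk k \<omega> \<eta> = (\<Sum>I\<in>Sk k. eps I * pr I (\<omega> I) (\<eta> (NN - I)))"
definition fac :: "nat \<Rightarrow> complex" where "fac m = (if m = 0 then 1 else of_nat m)"
definition Tsum :: "eform \<Rightarrow> nat set \<Rightarrow> op" where
  "Tsum \<omega> I = (\<lambda>a b. \<Sum>j\<in>I. stensor d j (I - {j}) (\<omega> (I - {j})) a b)"
definition Uf :: "eform \<Rightarrow> eform \<Rightarrow> nat set \<Rightarrow> nat \<Rightarrow> complex" where
  "Uf \<omega> \<eta> J j = (\<Sum>x\<in>idx d NN. \<Sum>x'\<in>idx d NN. cnj (\<psi> x) *
     (if x j = x' j then \<omega> J (rs J x) (rs J x') else 0) *
     \<eta> (NN - J - {j}) (rs (NN - J - {j}) x) (rs (NN - J - {j}) x') * \<psi> x')"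

lemma fac_nz: "fac m \<noteq> 0" by (simp add: fac_def)

lemma finite_Sk: "finite (Sk k)"
  unfolding Sk_def by (rule finite_subset[of _ "Pow NN"]) auto

lemma restr_scale: "restr n d \<psi> I (\<lambda>a b. c * X a b) = (\<lambda>a b. c * restr n d \<psi> I X a b)"
  by (simp add: restr_def op_mult_scale_left op_mult_scale_right)

lemma restr_add: "restr n d \<psi> I (X + Y) = restr n d \<psi> I X + restr n d \<psi> I Y"
  by (simp add: restr_def op_mult_add_left op_mult_add_right)

lemma restr_zero: "restr n d \<psi> I 0 = 0"
  by (simp add: restr_def)

lemma restr_Id:
  assumes I: "I \<subseteq> NN"
  shows "restr n d \<psi> I (\<lambda>a b. c * (if a \<in> idx d I \<and> a = b then 1 else 0)) = (\<lambda>a b. c * PP I a b)"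
proof -
  have sup: "op_supported d I (PP I)" using orth_proj_supp[OF P_proj[OF I]] .
  have fin: "finite (idx d I)" using finite_idx finite_sub[OF I] by blast
  have "op_mult d I (\<lambda>a b. if a \<in> idx d I \<and> a = b then 1 else 0) (PP I) = PP I"
  proof (intro ext)
    fix a b show "op_mult d I (\<lambda>a b. if a \<in> idx d I \<and> a = b then 1 else 0) (PP I) a b = PP I a b"
    proof (cases "a \<in> idx d I \<and> b \<in> idx d I")
      case True
      have "(\<Sum>c\<in>idx d I. (if a \<in> idx d I \<and> a = c then 1 else 0) * PP I c b) = (\<Sum>c\<in>idx d I. if c = a then PP I c b else 0)"
        by (rule sum.cong) (use True in auto)
      also have "\<dots> = PP I a b" using True fin by simp
      finally show ?thesis using True by (simp add: op_mult_def)
    next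
      case False then show ?thesis using sup by (auto simp: op_mult_def op_supported_def)
    qed
  qed
  then show ?thesis
    using orth_proj_idem[OF P_proj[OF I]]
    by (simp add: restr_def op_mult_scale_left[where X = "\<lambda>a b. if a \<in> idx d I \<and> a = b then 1 else 0"] op_mult_scale_right)
qed

lemma cob_formula:
  assumes m: "m < n"
  shows "DD m \<omega> I = (if gd (m + 1) I then (\<lambda>a b. fac m * restr n d \<psi> I (Tsum \<omega> I) a b) else 0)"
proof (cases "m = 0")
  case True
  have iff: "(\<exists>j\<in>NN. I = {j}) \<longleftrightarrow> I \<subseteq> NN \<and> card I = 1"
    by (auto simp: card_1_singleton_iff One_nat_def)
  show ?thesis
  proof (cases "I \<subseteq> NN \<and> card I = 1")
    case True2: True
    then obtain j where j: "j \<in> NN" "I = {j}" using iff by blast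
    have "Tsum \<omega> I = stensor d j {} (\<omega> {})" using j by (simp add: Tsum_def)
    then have "restr n d \<psi> I (Tsum \<omega> I) = (\<lambda>a b. \<omega> {} (\<lambda>i. 0) (\<lambda>i. 0) * PP I a b)"
      using restr_Id[of I] True2 j by (simp add: stensor_empty)
    moreover have "\<exists>j\<in>NN. I = {j}" using True2 iff by blast
    ultimately show ?thesis using True True2 by (simp add: cobound_def fac_def gd_def)
  next
    case False
    then have "\<not> (\<exists>j\<in>NN. I = {j})" using iff by blast
    then show ?thesis using True False unfolding cobound_def gd_def by auto
  qed
next
  case False
  then show ?thesis using m
    by (auto simp: cobound_def fac_def Tsum_def restr_scale[symmetric] gd_def)
qed

lemma sign_id:
  assumes J: "J \<subseteq> NN" and j: "j \<in> NN" "j \<notin> J"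
  shows "eps (insert j J) * sg j J = - (eps J * sg j (NN - J - {j}))"
proof -
  have finJ: "finite J" using finite_sub[OF J] .
  let ?p = "card {i\<in>J. i < j}" and ?q = "card {i\<in>NN - J - {j}. i < j}"
  have un: "{i\<in>J. i < j} \<union> {i\<in>NN - J - {j}. i < j} = {1..<j}" using J j by auto
  have "?p + ?q = card {1..<j}"
    by (subst un[symmetric], rule card_Un_disjoint[symmetric]) (use finJ in auto)
  then have pq: "?p + ?q = j - 1" by simp
  have j1: "j \<ge> 1" using j by simp
  have e1: "eps (insert j J) = (-1) ^ j * eps J"
    using finJ j by (simp add: eps_def power_add)
  have pp: "(-1::complex) ^ ?p * (-1) ^ ?p = 1"
    by (simp add: power_add[symmetric])
  have jj: "(-1::complex) ^ j = - ((-1) ^ ?p * (-1) ^ ?q)"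
  proof -
    have "(-1::complex) ^ j = (-1) ^ (Suc (j - 1))" using j1 by simp
    also have "\<dots> = - ((-1) ^ (?p + ?q))" using pq by simp
    finally show ?thesis by (simp add: power_add)
  qed
  have "eps (insert j J) * sg j J = - (((-1) ^ ?p * (-1) ^ ?p) * (-1) ^ ?q * eps J)"
    unfolding e1 jj sg_def by (simp add: mult_ac)
  also have "\<dots> = - (eps J * sg j (NN - J - {j}))" unfolding pp sg_def by (simp add: mult_ac)
  finally show ?thesis .
qed

lemma pr_st_left:
  assumes I: "I \<subseteq> NN" and j: "j \<in> I"
  shows "pr I (stensor d j (I - {j}) (\<omega> (I - {j}))) (\<eta> (NN - I)) = sg j (I - {j}) * Uf \<omega> \<eta> (I - {j}) j"
proof -
  have ins: "insert j (I - {j}) = I" using j by auto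
  have cmp: "NN - (I - {j}) - {j} = NN - I" using j by auto
  have st: "stensor d j (I - {j}) (\<omega> (I - {j})) (rs I x) (rs I x') =
      sg j (I - {j}) * (if x j = x' j then \<omega> (I - {j}) (rs (I - {j}) x) (rs (I - {j}) x') else 0)"
    if "x \<in> idx d NN" "x' \<in> idx d NN" for x x'
    using stensor_rs[of j "I - {j}" x d NN x' "\<omega> (I - {j})"] that I j unfolding ins sg_def by auto
  show ?thesis
    unfolding pr_def Uf_def cmp sum_distrib_left
    by (intro sum.cong refl) (simp add: st mult_ac)
qed

lemma pr_st_right:
  assumes J: "J \<subseteq> NN" and j: "j \<in> NN - J"
  shows "pr J (\<omega> J) (stensor d j (NN - J - {j}) (\<eta> (NN - J - {j}))) = sg j (NN - J - {j}) * Uf \<omega> \<eta> J j"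
proof -
  have ins: "insert j (NN - J - {j}) = NN - J" using j by auto
  have st: "stensor d j (NN - J - {j}) (\<eta> (NN - J - {j})) (rs (NN - J) x) (rs (NN - J) x') =
      sg j (NN - J - {j}) * (if x j = x' j then \<eta> (NN - J - {j}) (rs (NN - J - {j}) x) (rs (NN - J - {j}) x') else 0)"
    if "x \<in> idx d NN" "x' \<in> idx d NN" for x x'
    using stensor_rs[of j "NN - J - {j}" x d NN x' "\<eta> (NN - J - {j})"] that J j unfolding ins sg_def by auto
  show ?thesis
    unfolding pr_def Uf_def sum_distrib_left
    by (intro sum.cong refl) (simp add: st mult_ac)
qed

lemma Bk_left_cob:
  assumes k: "k < n"
  shows "Bk (Suc k) (DD k \<omega>) \<eta> = fac k * (\<Sum>I\<in>Sk (Suc k). \<Sum>j\<in>I. eps I * sg j (I - {j}) * Uf \<omega> \<eta> (I - {j}) j)"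
proof -
  have "pr I (DD k \<omega> I) (\<eta> (NN - I)) = fac k * (\<Sum>j\<in>I. sg j (I - {j}) * Uf \<omega> \<eta> (I - {j}) j)"
    if I: "I \<in> Sk (Suc k)" for I
  proof -
    have I': "I \<subseteq> NN" "card I = k + 1" using I by (auto simp: Sk_def)
    have "pr I (DD k \<omega> I) (\<eta> (NN - I)) = fac k * pr I (restr n d \<psi> I (Tsum \<omega> I)) (\<eta> (NN - I))"
      using I' by (simp add: cob_formula[OF k] pr_scale_left gd_def)
    also have "\<dots> = fac k * pr I (Tsum \<omega> I) (\<eta> (NN - I))" by (simp add: pr_restr_left[OF I'(1)])
    also have "\<dots> = fac k * (\<Sum>j\<in>I. pr I (stensor d j (I - {j}) (\<omega> (I - {j}))) (\<eta> (NN - I)))"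
      unfolding Tsum_def pr_sum_left ..
    also have "\<dots> = fac k * (\<Sum>j\<in>I. sg j (I - {j}) * Uf \<omega> \<eta> (I - {j}) j)"
      by (rule arg_cong[where f="\<lambda>x. fac k * x"], rule sum.cong[OF refl], rule pr_st_left[OF I'(1)])
    finally show ?thesis .
  qed
  then show ?thesis unfolding Bk_def
    by (simp add: sum_distrib_left mult_ac)
qed

lemma Bk_right_cob:
  assumes k: "k < n"
  shows "Bk k \<omega> (DD (n - k - 1) \<eta>) = fac (n - k - 1) * (\<Sum>J\<in>Sk k. \<Sum>j\<in>NN - J. eps J * sg j (NN - J - {j}) * Uf \<omega> \<eta> J j)"
proof -
  have "pr J (\<omega> J) (DD (n - k - 1) \<eta> (NN - J)) = fac (n - k - 1) * (\<Sum>j\<in>NN - J. sg j (NN - J - {j}) * Uf \<omega> \<eta> J j)"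
    if J: "J \<in> Sk k" for J
  proof -
    have J': "J \<subseteq> NN" "card J = k" using J by (auto simp: Sk_def)
    have cJ: "card (NN - J) = n - k - 1 + 1" using J' k by (simp add: card_Diff_subset finite_sub)
    have sub: "NN - J \<subseteq> NN" by auto
    have e: "NN - (NN - J) = J" using J' by auto
    have "pr J (\<omega> J) (DD (n - k - 1) \<eta> (NN - J)) = fac (n - k - 1) * pr J (\<omega> J) (restr n d \<psi> (NN - J) (Tsum \<eta> (NN - J)))"
      using cJ k by (simp add: cob_formula pr_scale_right gd_def)
    also have "\<dots> = fac (n - k - 1) * pr J (\<omega> J) (Tsum \<eta> (NN - J))" by (simp add: pr_restr_right[OF J'(1)])
    also have "\<dots> = fac (n - k - 1) * (\<Sum>j\<in>NN - J. pr J (\<omega> J) (stensor d j (NN - J - {j}) (\<eta> (NN - J - {j}))))"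
      unfolding Tsum_def pr_sum_right ..
    also have "\<dots> = fac (n - k - 1) * (\<Sum>j\<in>NN - J. sg j (NN - J - {j}) * Uf \<omega> \<eta> J j)"
      by (rule arg_cong[where f="\<lambda>x. fac (n - k - 1) * x"], rule sum.cong[OF refl], rule pr_st_right[OF J'(1)])
    finally show ?thesis .
  qed
  then show ?thesis unfolding Bk_def
    by (simp add: sum_distrib_left mult_ac)
qed

lemma adjoint:
  assumes k: "k < n"
  shows "fac (n - k - 1) * Bk (Suc k) (DD k \<omega>) \<eta> = - (fac k * Bk k \<omega> (DD (n - k - 1) \<eta>))"
proof -
  define G where "G J j = eps (insert j J) * sg j J * Uf \<omega> \<eta> J j" for J j
  have "(\<Sum>I\<in>Sk (Suc k). \<Sum>j\<in>I. eps I * sg j (I - {j}) * Uf \<omega> \<eta> (I - {j}) j)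
      = (\<Sum>I\<in>Sk (Suc k). \<Sum>j\<in>I. G (I - {j}) j)"
    by (intro sum.cong refl) (simp add: G_def insert_absorb)
  also have "\<dots> = (\<Sum>J\<in>Sk k. \<Sum>j\<in>NN - J. G J j)"
    unfolding Sk_def by (rule reindex_pairs) simp
  also have "\<dots> = (\<Sum>J\<in>Sk k. \<Sum>j\<in>NN - J. - (eps J * sg j (NN - J - {j}) * Uf \<omega> \<eta> J j))"
  proof (intro sum.cong refl)
    fix J j assume J: "J \<in> Sk k" and j: "j \<in> NN - J"
    show "G J j = - (eps J * sg j (NN - J - {j}) * Uf \<omega> \<eta> J j)"
      using sign_id[of J j] J j unfolding G_def Sk_def by (simp add: mult_ac)
  qed
  also have "\<dots> = - (\<Sum>J\<in>Sk k. \<Sum>j\<in>NN - J. eps J * sg j (NN - J - {j}) * Uf \<omega> \<eta> J j)"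
    by (simp add: sum_negf)
  finally have X: "(\<Sum>I\<in>Sk (Suc k). \<Sum>j\<in>I. eps I * sg j (I - {j}) * Uf \<omega> \<eta> (I - {j}) j) =
     - (\<Sum>J\<in>Sk k. \<Sum>j\<in>NN - J. eps J * sg j (NN - J - {j}) * Uf \<omega> \<eta> J j)" .
  show ?thesis unfolding Bk_left_cob[OF k] Bk_right_cob[OF k] X by (simp add: mult_ac)
qed

end

declare One_nat_def [simp del]

interpretation cs: vector_space cscale
  by unfold_locales (simp_all add: cscale_def fun_eq_iff distrib_left distrib_right)

lemma cscale_apply: "cscale c \<omega> I = (\<lambda>a b. c * \<omega> I a b)"
  by (simp add: cscale_def)

lemma plus_apply3: "(\<omega> + \<omega>') I = (\<lambda>a b. \<omega> I a b + \<omega>' I a b)"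
  by (simp add: plus_fun_def)

context ent
begin

lemma eforms0_iff: "\<omega> \<in> VV 0 \<longleftrightarrow> (\<forall>I. I \<noteq> {} \<longrightarrow> \<omega> I = 0) \<and>
  (\<forall>a b. a \<noteq> (\<lambda>i. 0) \<or> b \<noteq> (\<lambda>i. 0) \<longrightarrow> \<omega> {} a b = 0)"
  by (simp add: eforms_def)

lemma eformsk_iff: "0 < k \<Longrightarrow> \<omega> \<in> VV k \<longleftrightarrow>
   (\<forall>I. if gd k I then (\<exists>X. \<omega> I = restr n d \<psi> I X) else \<omega> I = 0)"
  by (simp add: eforms_def gd_def)

lemma V_subspace: "cs.subspace (VV k)"
proof (cases "k = 0")
  case True
  have "cs.subspace (VV 0)"
  proof (rule cs.subspaceI)
    show "0 \<in> VV 0" unfolding eforms0_iff by (simp add: fun_eq_iff)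
  next
    fix x y assume x: "x \<in> VV 0" and y: "y \<in> VV 0"
    show "x + y \<in> VV 0" using x y unfolding eforms0_iff by (simp add: fun_eq_iff)
  next
    fix c x assume x: "x \<in> VV 0"
    show "cscale c x \<in> VV 0" using x unfolding eforms0_iff by (simp add: cscale_apply fun_eq_iff)
  qed
  then show ?thesis using True by simp
next
  case False
  then have k: "0 < k" by simp
  show ?thesis
  proof (rule cs.subspaceI)
    show "0 \<in> VV k" unfolding eformsk_iff[OF k]
      using restr_zero by (auto intro: exI[of _ 0])
  next
    fix x y assume x: "x \<in> VV k" and y: "y \<in> VV k"
    show "x + y \<in> VV k" unfolding eformsk_iff[OF k]
    proof
      fix I
      show "if gd k I then \<exists>X. (x + y) I = restr n d \<psi> I X else (x + y) I = 0"
      proof (cases "gd k I")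
        case True
        then obtain X Y where "x I = restr n d \<psi> I X" "y I = restr n d \<psi> I Y"
          using x y unfolding eformsk_iff[OF k] by metis
        then have "(x + y) I = restr n d \<psi> I (X + Y)" by (simp add: restr_add)
        then show ?thesis using True by auto
      next
        case False then show ?thesis using x y unfolding eformsk_iff[OF k] by (metis plus_fun_apply add_0)
      qed
    qed
  next
    fix c x assume x: "x \<in> VV k"
    show "cscale c x \<in> VV k" unfolding eformsk_iff[OF k]
    proof
      fix I
      show "if gd k I then \<exists>X. cscale c x I = restr n d \<psi> I X else cscale c x I = 0"
      proof (cases "gd k I")
        case True
        then obtain X where "x I = restr n d \<psi> I X" using x unfolding eformsk_iff[OF k] by metis
        then have "cscale c x I = restr n d \<psi> I (\<lambda>a b. c * X a b)" by (simp add: restr_scale cscale_apply)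
        then show ?thesis using True by auto
      next
        case False then have "x I = 0" using x unfolding eformsk_iff[OF k] by metis
        then show ?thesis using False by (simp add: cscale_def fun_eq_iff)
      qed
    qed
  qed
qed

lemma restr_supported: "a \<notin> idx d I \<or> b \<notin> idx d I \<Longrightarrow> restr n d \<psi> I X a b = 0"
  by (simp add: restr_def op_mult_outside)

lemma V_supp:
  assumes w: "\<omega> \<in> VV k" and nz: "\<omega> J a b \<noteq> 0"
  shows "J \<subseteq> NN \<and> a \<in> idx d J \<and> b \<in> idx d J"
proof (cases "k = 0")
  case True
  have w0: "\<omega> \<in> VV 0" using w True by simp
  have C: "(\<forall>I. I \<noteq> {} \<longrightarrow> \<omega> I = 0) \<and> (\<forall>a b. a \<noteq> (\<lambda>i. 0) \<or> b \<noteq> (\<lambda>i. 0) \<longrightarrow> \<omega> {} a b = 0)"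
    using w0 unfolding eforms0_iff .
  have C1: "\<And>I. I \<noteq> {} \<Longrightarrow> \<omega> I = 0" using C by blast
  have C2: "\<And>a b. a \<noteq> (\<lambda>i. 0) \<or> b \<noteq> (\<lambda>i. 0) \<Longrightarrow> \<omega> {} a b = 0" using C by blast
  have "J = {}"
  proof (rule ccontr)
    assume "J \<noteq> {}" then have "\<omega> J = 0" by (rule C1)
    then show False using nz by simp
  qed
  moreover have "a = (\<lambda>i. 0) \<and> b = (\<lambda>i. 0)"
  proof (rule ccontr)
    assume "\<not> (a = (\<lambda>i. 0) \<and> b = (\<lambda>i. 0))"
    then have "\<omega> {} a b = 0" using C2 by blast
    then show False using nz \<open>J = {}\<close> by simp
  qed
  ultimately show ?thesis by (simp add: idx_empty)
next
  case False
  then have k: "0 < k" by simp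
  have "if gd k J then \<exists>X. \<omega> J = restr n d \<psi> J X else \<omega> J = 0"
    using w unfolding eformsk_iff[OF k] by blast
  show ?thesis
  proof (cases "gd k J")
    case True
    then obtain X where X: "\<omega> J = restr n d \<psi> J X" using \<open>if gd k J then _ else _\<close> by auto
    then have "a \<in> idx d J \<and> b \<in> idx d J" using nz restr_supported[of a J b X] by auto
    then show ?thesis using True by (simp add: gd_def)
  next
    case False
    then have "\<omega> J = 0" using \<open>if gd k J then _ else _\<close> by auto
    then show ?thesis using nz by simp
  qed
qed

definition elem :: "nat set \<Rightarrow> (nat \<Rightarrow> nat) \<Rightarrow> (nat \<Rightarrow> nat) \<Rightarrow> eform" where
  "elem J a b = (\<lambda>J' x y. if J' = J \<and> x = a \<and> y = b then 1 else 0)"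

definition Sig where "Sig = (SIGMA J:Pow NN. idx d J \<times> idx d J)"

lemma finite_Sig: "finite Sig"
  unfolding Sig_def
  by (rule finite_SigmaI) (auto intro!: finite_idx dest: finite_sub)

definition Gen where "Gen = (\<lambda>(J, a, b). elem J a b) ` Sig"

lemma finite_Gen: "finite Gen" unfolding Gen_def using finite_Sig by simp

lemma V_span: "VV k \<subseteq> cs.span Gen"
proof
  fix \<omega> assume w: "\<omega> \<in> VV k"
  define F where "F p = cscale (\<omega> (fst p) (fst (snd p)) (snd (snd p))) (elem (fst p) (fst (snd p)) (snd (snd p)))" for p
  have eq: "\<omega> = (\<Sum>p\<in>Sig. F p)"
  proof (intro ext)
    fix J x y
    have "(\<Sum>p\<in>Sig. F p) J x y = (\<Sum>p\<in>Sig. F p J x y)" by (simp add: sum_fun_apply)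
    also have "\<dots> = (\<Sum>p\<in>Sig. if p = (J, x, y) then \<omega> J x y else 0)"
    proof (rule sum.cong[OF refl])
      fix p show "F p J x y = (if p = (J, x, y) then \<omega> J x y else 0)"
        by (cases p) (auto simp: F_def cscale_def elem_def)
    qed
    also have "\<dots> = (if (J, x, y) \<in> Sig then \<omega> J x y else 0)"
      using finite_Sig by (simp add: sum.delta)
    also have "\<dots> = \<omega> J x y"
      using V_supp[OF w, of J x y] by (auto simp: Sig_def)
    finally show "\<omega> J x y = (\<Sum>p\<in>Sig. F p) J x y" by simp
  qed
  have "(\<Sum>p\<in>Sig. F p) \<in> cs.span Gen" unfolding F_def
  proof (rule cs.span_sum)
    fix p assume "p \<in> Sig"
    then have "elem (fst p) (fst (snd p)) (snd (snd p)) \<in> Gen" unfolding Gen_def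
      by (rule image_eqI[rotated]) (simp add: split_beta)
    then show "cscale (\<omega> (fst p) (fst (snd p)) (snd (snd p))) (elem (fst p) (fst (snd p)) (snd (snd p))) \<in> cs.span Gen"
      by (intro cs.span_scale cs.span_base)
  qed
  then show "\<omega> \<in> cs.span Gen" using eq by simp
qed

lemma stensor_add_apply: "stensor d j J (X + Y) a b = stensor d j J X a b + stensor d j J Y a b"
  by (simp add: stensor_def distrib_left)

lemma Tsum_add: "Tsum (\<omega> + \<omega>') I = Tsum \<omega> I + Tsum \<omega>' I"
  by (rule ext)+ (simp add: Tsum_def stensor_add_apply sum.distrib)

lemma Tsum_scale: "Tsum (cscale c \<omega>) I = (\<lambda>a b. c * Tsum \<omega> I a b)"
  by (simp add: Tsum_def cscale_apply stensor_scale sum_distrib_left)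

lemma D_zero: "0 < n \<Longrightarrow> n \<le> k \<Longrightarrow> DD k \<omega> = 0"
  by (simp add: cobound_def)

lemma D_add: "0 < n \<Longrightarrow> DD k (\<omega> + \<omega>') = DD k \<omega> + DD k \<omega>'"
proof (cases "k < n")
  case True
  show ?thesis
  proof (rule ext)
    fix I show "DD k (\<omega> + \<omega>') I = (DD k \<omega> + DD k \<omega>') I"
      by (cases "gd (k + 1) I") (simp_all add: cob_formula[OF True] Tsum_add restr_add distrib_left fun_eq_iff)
  qed
qed (simp add: D_zero)

lemma D_scale: "0 < n \<Longrightarrow> DD k (cscale c \<omega>) = cscale c (DD k \<omega>)"
proof (cases "k < n")
  case True
  show ?thesis
  proof (rule ext)
    fix I show "DD k (cscale c \<omega>) I = cscale c (DD k \<omega>) I"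
      by (cases "gd (k + 1) I") (simp_all add: cob_formula[OF True] cscale_apply Tsum_scale restr_scale mult_ac fun_eq_iff)
  qed
qed (simp add: D_zero cscale_def fun_eq_iff)

lemma D_into:
  assumes k: "k < n"
  shows "DD k \<omega> \<in> VV (k + 1)"
  unfolding eformsk_iff[of "k + 1", OF zero_less_Suc[of k, unfolded Suc_eq_plus1]]
  by (auto simp: cob_formula[OF k] restr_scale[symmetric])

lemma Bk_add_left: "Bk k (\<omega> + \<omega>') \<eta> = Bk k \<omega> \<eta> + Bk k \<omega>' \<eta>"
  by (simp add: Bk_def plus_fun_def[of \<omega>] pr_add_left distrib_left sum.distrib)

lemma Bk_scale_left: "Bk k (cscale c \<omega>) \<eta> = c * Bk k \<omega> \<eta>"
  by (simp add: Bk_def cscale_apply pr_scale_left sum_distrib_left mult_ac)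

lemma Bk_add_right: "Bk k \<omega> (\<eta> + \<eta>') = Bk k \<omega> \<eta> + Bk k \<omega> \<eta>'"
  by (simp add: Bk_def plus_fun_def[of \<eta>] pr_add_right distrib_left sum.distrib)

lemma Bk_scale_right: "Bk k \<omega> (cscale c \<eta>) = c * Bk k \<omega> \<eta>"
  by (simp add: Bk_def cscale_apply pr_scale_right sum_distrib_left mult_ac)

lemma Bk_zero_right: "Bk k \<omega> 0 = 0"
  by (simp add: Bk_def pr_zero_right)

end

declare One_nat_def [simp del]

lemma op_mult_empty:
  "op_mult d {} A B = (\<lambda>a b. if a = (\<lambda>i. 0) \<and> b = (\<lambda>i. 0) then A (\<lambda>i. 0) (\<lambda>i. 0) * B (\<lambda>i. 0) (\<lambda>i. 0) else 0)"
  by (rule ext)+ (simp add: op_mult_def idx_empty)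

lemma image_subspace:
  assumes S: "cs.subspace S" and add: "\<And>x y. f (x + y) = f x + f y"
    and sc: "\<And>c x. f (cscale c x) = cscale c (f x)"
  shows "cs.subspace (f ` S)"
proof (rule cs.subspaceI)
  have f0: "f 0 = 0" using add[of 0 0] by (metis add_cancel_right_right add_0)
  show "0 \<in> f ` S" using cs.subspace_0[OF S] f0 by (metis image_eqI)
next
  fix x y assume "x \<in> f ` S" "y \<in> f ` S"
  then obtain x' y' where "x' \<in> S" "y' \<in> S" "x = f x'" "y = f y'" by blast
  then show "x + y \<in> f ` S" using cs.subspace_add[OF S] add by (metis image_eqI)
next
  fix c x assume "x \<in> f ` S"
  then obtain x' where "x' \<in> S" "x = f x'" by blast
  then show "cscale c x \<in> f ` S" using cs.subspace_scale[OF S] sc by (metis image_eqI)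
qed

context ent
begin

lemma restr_empty:
  "restr n d \<psi> {} X = (\<lambda>a b. if a = (\<lambda>i. 0) \<and> b = (\<lambda>i. 0) then X (\<lambda>i. 0) (\<lambda>i. 0) else 0)"
  by (rule ext)+ (simp add: restr_def op_mult_empty P_empty)

lemma V0_restr:
  assumes w: "\<omega> \<in> VV 0"
  shows "\<omega> {} = restr n d \<psi> {} (\<omega> {})"
proof (intro ext)
  fix a b
  have C: "\<forall>a b. a \<noteq> (\<lambda>i. 0) \<or> b \<noteq> (\<lambda>i. 0) \<longrightarrow> \<omega> {} a b = 0" using w unfolding eforms0_iff by blast
  show "\<omega> {} a b = restr n d \<psi> {} (\<omega> {}) a b"
    using C unfolding restr_empty by auto
qed

lemma nondeg:
  assumes k: "k \<le> n" and w: "\<omega> \<in> VV k" and nz: "\<omega> \<noteq> 0"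
  shows "\<exists>\<eta>\<in>VV (n - k). Bk k \<omega> \<eta> \<noteq> 0"
proof -
  have "\<exists>I. \<omega> I \<noteq> 0"
  proof (rule ccontr)
    assume "\<not> (\<exists>I. \<omega> I \<noteq> 0)"
    then have "\<omega> = 0" by (intro ext) simp
    then show False using nz by simp
  qed
  then obtain I where I: "\<omega> I \<noteq> 0" by blast
  have gI: "gd k I \<and> (\<exists>X. \<omega> I = restr n d \<psi> I X)"
  proof (cases "k = 0")
    case True
    then have w0: "\<omega> \<in> VV 0" using w by simp
    have "I = {}"
    proof (rule ccontr)
      assume "I \<noteq> {}" then have "\<omega> I = 0" using w0 unfolding eforms0_iff by blast
      then show False using I by simp
    qed
    then show ?thesis using True V0_restr[OF w0] by (auto simp: gd_def)
  next
    case False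
    then have "if gd k I then \<exists>X. \<omega> I = restr n d \<psi> I X else \<omega> I = 0" using w eformsk_iff by auto
    then show ?thesis using I by (auto split: if_splits)
  qed
  then obtain X where X: "\<omega> I = restr n d \<psi> I X" by blast
  have Isub: "I \<subseteq> NN" and cI: "card I = k" using gI by (auto simp: gd_def)
  obtain Y where Y: "pr I (restr n d \<psi> I X) (restr n d \<psi> (NN - I) Y) \<noteq> 0"
    using nondeg_comp[OF Isub, of X] I X by auto
  define \<eta> where "\<eta> = (\<lambda>J. if J = NN - I then restr n d \<psi> (NN - I) Y else 0)"
  have cNI: "card (NN - I) = n - k" using Isub cI by (simp add: card_Diff_subset finite_sub)
  have eta: "\<eta> \<in> VV (n - k)"
  proof (cases "n - k = 0")
    case True
    then have e: "NN - I = {}" using cNI by (simp add: card_eq_0_iff)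
    show ?thesis unfolding True eforms0_iff \<eta>_def e
      by (auto simp: restr_empty)
  next
    case False
    then have pos: "0 < n - k" by simp
    show ?thesis unfolding eformsk_iff[OF pos]
    proof
      fix J
      show "if gd (n - k) J then \<exists>X. \<eta> J = restr n d \<psi> J X else \<eta> J = 0"
      proof (cases "J = NN - I")
        case True
        then have "gd (n - k) J" using cNI by (simp add: gd_def)
        then show ?thesis using True by (auto simp: \<eta>_def)
      next
        case False
        then show ?thesis using restr_zero[of J] by (auto simp: \<eta>_def intro: exI[of _ 0])
      qed
    qed
  qed
  have IS: "I \<in> Sk k" using Isub cI by (simp add: Sk_def)
  have rest: "(\<Sum>J\<in>Sk k - {I}. eps J * pr J (\<omega> J) (\<eta> (NN - J))) = 0"
  proof (rule sum.neutral, rule ballI)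
    fix J assume J: "J \<in> Sk k - {I}"
    then have "NN - J \<noteq> NN - I" using Isub by (auto simp: Sk_def)
    then show "eps J * pr J (\<omega> J) (\<eta> (NN - J)) = 0" by (simp add: \<eta>_def pr_zero_right)
  qed
  have "Bk k \<omega> \<eta> = eps I * pr I (\<omega> I) (\<eta> (NN - I)) + (\<Sum>J\<in>Sk k - {I}. eps J * pr J (\<omega> J) (\<eta> (NN - J)))"
    unfolding Bk_def by (rule sum.remove[OF finite_Sk IS])
  also have "\<dots> = eps I * pr I (restr n d \<psi> I X) (restr n d \<psi> (NN - I) Y)"
    using rest X by (simp add: \<eta>_def)
  finally have "Bk k \<omega> \<eta> \<noteq> 0" using Y by (simp add: eps_def)
  then show ?thesis using eta by blast
qed

lemma Bk_span_zero:
  assumes "\<And>y. y \<in> C \<Longrightarrow> Bk k \<omega> y = 0" and "z \<in> cs.span C"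
  shows "Bk k \<omega> z = 0"
  using assms(2)
proof (induction rule: cs.span_induct_alt)
  case base then show ?case by (rule Bk_zero_right)
next
  case (step c x y)
  have "Bk k \<omega> (cscale c x + y) = c * Bk k \<omega> x + Bk k \<omega> y" by (simp only: Bk_add_right Bk_scale_right)
  then have h: "Bk k \<omega> (cscale c x + y) = 0" using step assms(1) by simp
  have "cscale c x + y = (\<lambda>a b d. cscale c x a b d + y a b d)" by (simp add: fun_eq_iff)
  then show ?case using h by metis
qed

lemma dimV_le:
  assumes k: "k \<le> n"
  shows "cs.dim (VV k) \<le> cs.dim (VV (n - k))"
proof -
  obtain C where C: "finite C" "C \<subseteq> VV (n - k)" "cs.independent C" "VV (n - k) \<subseteq> cs.span C"
    "card C = cs.dim (VV (n - k))"
    using cs.findim_basis[OF finite_Gen V_span] by blast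
  have "cs.dim (VV k) \<le> card C"
  proof (rule cs.core_dim[where \<phi> = "\<lambda>y x. Bk k x y"])
    show "finite C" by fact
    show "cs.subspace (VV k)" by (rule V_subspace)
    show "\<forall>e\<in>C. \<forall>x\<in>VV k. \<forall>y\<in>VV k. Bk k (x + y) e = Bk k x e + Bk k y e" by (simp add: Bk_add_left)
    show "\<forall>e\<in>C. \<forall>x\<in>VV k. \<forall>c. Bk k (cscale c x) e = c * Bk k x e" by (simp add: Bk_scale_left)
    show "\<forall>x\<in>VV k. (\<forall>e\<in>C. Bk k x e = 0) \<longrightarrow> x = 0"
    proof (intro ballI impI)
      fix x assume x: "x \<in> VV k" and z: "\<forall>e\<in>C. Bk k x e = 0"
      show "x = 0"
      proof (rule ccontr)
        assume "x \<noteq> 0"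
        then obtain \<eta> where \<eta>: "\<eta> \<in> VV (n - k)" "Bk k x \<eta> \<noteq> 0" using nondeg[OF k x] by blast
        have "Bk k x \<eta> = 0" using Bk_span_zero[of C k x \<eta>] z C(4) \<eta>(1) by blast
        then show False using \<eta>(2) by simp
      qed
    qed
  qed
  then show ?thesis using C(5) by simp
qed

lemma rank_le:
  assumes k: "k < n"
  shows "cs.dim (DD k ` VV k) \<le> cs.dim (DD (n - k - 1) ` VV (n - k - 1))"
proof -
  have npos: "0 < n" using k by simp
  let ?k' = "n - k - 1"
  let ?W = "DD ?k' ` VV ?k'"
  have WG: "?W \<subseteq> cs.span (DD ?k' ` Gen)"
    using cs.span_image_lin[OF D_add[OF npos, where k = ?k'] D_scale[OF npos, where k = ?k']] V_span by blast
  obtain C where C: "finite C" "C \<subseteq> ?W" "cs.independent C" "?W \<subseteq> cs.span C" "card C = cs.dim ?W"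
    using cs.findim_basis[OF _ WG] finite_Gen by blast
  have "\<forall>y\<in>C. \<exists>\<eta>\<in>VV ?k'. DD ?k' \<eta> = y" using C(2) by blast
  then obtain g where g: "\<And>y. y \<in> C \<Longrightarrow> g y \<in> VV ?k' \<and> DD ?k' (g y) = y" by metis
  have adj: "fac ?k' * Bk (Suc k) (DD k \<omega>) \<eta> = - (fac k * Bk k \<omega> (DD ?k' \<eta>))" for \<omega> \<eta>
    by (rule adjoint[OF k])
  have "cs.dim (DD k ` VV k) \<le> card C"
  proof (rule cs.core_dim[where \<phi> = "\<lambda>y x. Bk (Suc k) x (g y)"])
    show "finite C" by fact
    show "cs.subspace (DD k ` VV k)"
      by (rule image_subspace[OF V_subspace D_add[OF npos, where k = k] D_scale[OF npos, where k = k]])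
    show "\<forall>e\<in>C. \<forall>x\<in>DD k ` VV k. \<forall>y\<in>DD k ` VV k. Bk (Suc k) (x + y) (g e) = Bk (Suc k) x (g e) + Bk (Suc k) y (g e)"
      by (simp add: Bk_add_left)
    show "\<forall>e\<in>C. \<forall>x\<in>DD k ` VV k. \<forall>c. Bk (Suc k) (cscale c x) (g e) = c * Bk (Suc k) x (g e)"
      by (simp add: Bk_scale_left)
    show "\<forall>x\<in>DD k ` VV k. (\<forall>e\<in>C. Bk (Suc k) x (g e) = 0) \<longrightarrow> x = 0"
    proof (intro ballI impI)
      fix x assume x: "x \<in> DD k ` VV k" and z: "\<forall>e\<in>C. Bk (Suc k) x (g e) = 0"
      then obtain \<omega> where \<omega>: "\<omega> \<in> VV k" "x = DD k \<omega>" by blast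
      have onC: "Bk k \<omega> y = 0" if y: "y \<in> C" for y
      proof -
        have "fac ?k' * Bk (Suc k) (DD k \<omega>) (g y) = - (fac k * Bk k \<omega> (DD ?k' (g y)))" by (rule adj)
        then have "0 = - (fac k * Bk k \<omega> y)" using z y g[OF y] \<omega>(2) by simp
        then show ?thesis using fac_nz[of k] by simp
      qed
      have allz: "Bk (Suc k) x \<eta> = 0" if \<eta>: "\<eta> \<in> VV ?k'" for \<eta>
      proof -
        have "DD ?k' \<eta> \<in> cs.span C" using C(4) \<eta> by blast
        then have "Bk k \<omega> (DD ?k' \<eta>) = 0" using Bk_span_zero[of C k \<omega>] onC by blast
        then have "fac ?k' * Bk (Suc k) x \<eta> = 0" using adj[of \<omega> \<eta>] \<omega>(2) by simp
        then show ?thesis using fac_nz[of ?k'] by simp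
      qed
      have xV: "x \<in> VV (Suc k)" using D_into[OF k, of \<omega>] \<omega>(2) by (simp add: Suc_eq_plus1)
      show "x = 0"
      proof (rule ccontr)
        assume "x \<noteq> 0"
        then obtain \<eta> where \<eta>: "\<eta> \<in> VV (n - Suc k)" "Bk (Suc k) x \<eta> \<noteq> 0"
          using nondeg[of "Suc k" x] k xV by auto
        have "n - Suc k = ?k'" by simp
        then show False using allz \<eta> by metis
      qed
    qed
  qed
  then show ?thesis using C(5) by simp
qed

lemma rank_big: "0 < n \<Longrightarrow> n \<le> k \<Longrightarrow> cs.dim (DD k ` VV k) = 0"
proof -
  assume npos: "0 < n" and nk: "n \<le> k"
  have "DD k ` VV k \<subseteq> cs.span {}" using D_zero[OF npos nk] by (auto simp: fun_eq_iff)
  then show ?thesis using cs.dim_le_card[of "DD k ` VV k" "{}"] by simp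
qed

lemma main:
  assumes npos: "0 < n" and k: "k \<le> n"
  shows "cohom_dim n d \<psi> k = cohom_dim n d \<psi> (n - k)"
proof -
  define a where "a j = cs.dim (VV j)" for j
  define r where "r j = cs.dim (DD j ` VV j)" for j
  have rn: "cs.dim {\<omega> \<in> VV j. DD j \<omega> = 0} = a j - r j" for j
    using cs.rank_nullity[OF V_subspace[of j] finite_Gen V_span[of j] D_add[OF npos, where k = j] D_scale[OF npos, where k = j]]
    unfolding a_def r_def by simp
  have aeq: "a j = a (n - j)" if "j \<le> n" for j
    using dimV_le[OF that] dimV_le[of "n - j"] that unfolding a_def by simp
  have req: "r j = r (n - j - 1)" if "j < n" for j
  proof -
    have "n - (n - j - 1) - 1 = j" using that by simp
    then show ?thesis using rank_le[OF that] rank_le[of "n - j - 1"] that unfolding r_def by simp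
  qed
  have r0: "r j = 0" if "n \<le> j" for j using rank_big[OF npos that] unfolding r_def .
  have cd: "cohom_dim n d \<psi> j = a j - r j - (if j = 0 then 0 else r (j - 1))" for j
  proof -
    have "cohom_dim n d \<psi> j = cs.dim {\<omega> \<in> VV j. DD j \<omega> = 0} - (if j = 0 then 0 else r (j - 1))"
      unfolding cohom_dim_def r_def by simp
    then show ?thesis using rn[of j] by simp
  qed
  consider "k = 0" | "k = n" | "0 < k \<and> k < n" using k by linarith
  then show ?thesis
  proof cases
    case 1
    have "r (n - 1) = r 0" using req[of 0] npos by simp
    then show ?thesis using 1 cd[of 0] cd[of n] aeq[of 0] r0[of n] npos by simp
  next
    case 2
    have "r (n - 1) = r 0" using req[of 0] npos by simp
    then show ?thesis using 2 cd[of 0] cd[of n] aeq[of 0] r0[of n] npos by simp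
  next
    case 3
    have e1: "r k = r (n - k - 1)" using req[of k] 3 by simp
    have e2: "r (k - 1) = r (n - k)"
    proof -
      have "n - (k - 1) - 1 = n - k" using 3 by simp
      then show ?thesis using req[of "k - 1"] 3 by (metis diff_less le_less_trans less_imp_le_nat zero_less_one)
    qed
    have e3: "n - k - 1 = n - k - 1" ..
    show ?thesis using 3 cd[of k] cd[of "n - k"] aeq[of k] e1 e2 by (simp add: diff_diff_add add_ac)
  qed
qed

end

theorem corollary2:
  fixes n :: nat and d :: "nat \<Rightarrow> nat" and \<psi> :: "(nat \<Rightarrow> nat) \<Rightarrow> complex" and k :: nat
  assumes "(\<Sum>a\<in>idx d {1..n}. (cmod (\<psi> a))\<^sup>2) = 1"
    and "k \<le> n"
  shows "cohom_dim n d \<psi> k = cohom_dim n d \<psi> (n - k)"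
proof -
  interpret ent n d \<psi> by unfold_locales (rule assms(1))
  show ?thesis
  proof (cases "n = 0")
    case True
    then show ?thesis using assms(2) by simp
  next
    case False
    then have "0 < n" by simp
    then show ?thesis using main assms(2) by blast
  qed
qed

end
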